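(* Let $F\in SL(d,\mathbb{Z})$ be partially hyperbolic with invariant splitting $\mathbb{R}^d=S\oplus C\oplus U$, $\dim C=c$, and Katznelson irreducible ($C\cap\mathbb{Z}^d=\{0\}$). For $v\in\mathbb{R}^d$ let $v^c\in C$ be its projection to $C$ along $S\oplus U$, and order the standard basis $e_1,\dots,e_d$ of $\mathbb{R}^d$ so that $e_1^c,\dots,e_c^c$ is a basis of $C$. Identify $C$ with $\mathbb{R}^c$ via $e_i^c\mapsto e_i$ ($i\le c$), and let $P:\mathbb{R}^d\to\mathbb{R}^c$ be the resulting linear projection (so $Pe_i=e_i$ for $i=1,\dots,c$). Then there is $K>0$ such that for every $q\in\mathbb{Z}^c\setminus\{0\}$ there exists $i\in\{1,\dots,d\}$ with $$|Pe_i\cdot q-p|>\frac{K}{|q|^{c}}\quad\text{for all }p\in\mathbb{Z}.$$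
   Context: Partial hyperbolicity of $F$: for some metric, $\|F|_S\|<1$, $m(F|_U)>1$, $\|F|_S\|<m(F|_C)$, $m(F|_U)>\|F|_C\|$ ($m$ = conorm). Here $\cdot$ is the standard inner product on $\mathbb{R}^c$ and $|q|$ the Euclidean norm. *)

theory Defs
  imports "HOL-Analysis.Analysis"
begin

definition SL_int :: "real^'d^'d \<Rightarrow> bool" where
  "SL_int F \<longleftrightarrow> (\<forall>i j. F $ i $ j \<in> \<int>) \<and> det F = 1"

definition int_lattice :: "(real^'d) set" where
  "int_lattice = {x. \<forall>i. x $ i \<in> \<int>}"

definition direct_splitting :: "(real^'d) set \<Rightarrow> (real^'d) set \<Rightarrow> (real^'d) set \<Rightarrow> bool" where
  "direct_splitting S C U \<longleftrightarrow> subspace S \<and> subspace C \<and> subspace U \<and>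
     (\<forall>v. \<exists>!(s, c, u). s \<in> S \<and> c \<in> C \<and> u \<in> U \<and> v = s + c + u)"

definition cproj :: "(real^'d) set \<Rightarrow> (real^'d) set \<Rightarrow> (real^'d) set \<Rightarrow> real^'d \<Rightarrow> real^'d" where
  "cproj S C U v = fst (snd (THE (s, c, u). s \<in> S \<and> c \<in> C \<and> u \<in> U \<and> v = s + c + u))"

definition restr_norm :: "(real^'d \<Rightarrow> real) \<Rightarrow> real^'d^'d \<Rightarrow> (real^'d) set \<Rightarrow> real" where
  "restr_norm N F V = Sup {N (F *v x) / N x | x. x \<in> V \<and> x \<noteq> 0}"

definition restr_conorm :: "(real^'d \<Rightarrow> real) \<Rightarrow> real^'d^'d \<Rightarrow> (real^'d) set \<Rightarrow> real" where
  "restr_conorm N F V = Inf {N (F *v x) / N x | x. x \<in> V \<and> x \<noteq> 0}"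

text \<open>Partial hyperbolicity with respect to the invariant splitting S (+) C (+) U:
  for some inner product norm (every such norm has the form x \<mapsto> |A x| with A invertible),
  the four inequalities hold.\<close>
definition partially_hyperbolic ::
  "real^'d^'d \<Rightarrow> (real^'d) set \<Rightarrow> (real^'d) set \<Rightarrow> (real^'d) set \<Rightarrow> bool" where
  "partially_hyperbolic F S C U \<longleftrightarrow>
     direct_splitting S C U \<and>
     (\<lambda>x. F *v x) ` S = S \<and> (\<lambda>x. F *v x) ` C = C \<and> (\<lambda>x. F *v x) ` U = U \<and>
     S \<noteq> {0} \<and> C \<noteq> {0} \<and> U \<noteq> {0} \<and>
     (\<exists>A :: real^'d^'d. invertible A \<and>
        (let N = (\<lambda>x. norm (A *v x)) in
          restr_norm N F S < 1 \<and> restr_conorm N F U > 1 \<and>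
          restr_norm N F S < restr_conorm N F C \<and> restr_conorm N F U > restr_norm N F C))"

end

theory Submission
  imports Defs
begin

lemma rat_common_denom:
  assumes "finite I" "\<forall>i\<in>I. r i \<in> \<rat>"
  shows "\<exists>D::int. D > 0 \<and> (\<forall>i\<in>I. of_int D * (r i::real) \<in> \<int>)"
  using assms
proof (induction I rule: finite_induct)
  case empty
  then show ?case by (intro exI[of _ 1]) auto
next
  case (insert x F)
  then obtain D::int where D: "D > 0" "\<forall>i\<in>F. of_int D * r i \<in> \<int>" by auto
  from insert.prems have "r x \<in> \<rat>" by auto
  then obtain a b :: int where ab: "b > 0" "r x = of_int a / of_int b"
    by (metis Rats_cases')
  have "of_int (D*b) * r i \<in> \<int>" if "i \<in> F" for i
  proof -
    have "of_int (D*b) * r i = of_int b * (of_int D * r i)" by simp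
    moreover have "of_int D * r i \<in> \<int>" using D that by auto
    ultimately show ?thesis by (metis Ints_mult Ints_of_int)
  qed
  moreover have "of_int (D*b) * r x \<in> \<int>"
  proof -
    have bnz: "(of_int b::real) \<noteq> 0" using ab by simp
    have "of_int (D*b) * r x = (of_int (D*a)::real)" unfolding ab(2) using bnz by (simp add: field_simps)
    then show ?thesis by (metis Ints_of_int)
  qed
  ultimately have "\<forall>i\<in>insert x F. of_int (D*b) * r i \<in> \<int>" by blast
  moreover have "D*b > 0" using D(1) ab(1) by simp
  ultimately show ?case by blast
qed

lemma int_dep:
  fixes v :: "'i \<Rightarrow> real^'d"
  assumes fin: "finite I" and vint: "\<forall>i\<in>I. v i \<in> int_lattice"
    and dep: "(\<Sum>i\<in>I. c i *\<^sub>R v i) = 0" and i0: "i0 \<in> I" "c i0 \<noteq> 0"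
  shows "\<exists>c'. (\<forall>i\<in>I. c' i \<in> \<int>) \<and> (\<Sum>i\<in>I. c' i *\<^sub>R v i) = 0 \<and> c' i0 \<noteq> 0"
proof -
  interpret Qv: vector_space "\<lambda>(r::rat) (x::real). of_rat r * x"
    by unfold_locales (auto simp: algebra_simps of_rat_add of_rat_mult)
  define B where "B = Qv.extend_basis {c i0}"
  have ind1: "Qv.independent {c i0}"
    using i0 by (simp add: Qv.independent_insert Qv.span_empty)
  have Bind: "Qv.independent B" and Bspan: "Qv.span B = UNIV" and cB: "c i0 \<in> B"
    using Qv.independent_extend_basis[OF ind1] Qv.span_extend_basis[OF ind1]
      Qv.extend_basis_superset[OF ind1] unfolding B_def by auto
  define l where "l x = Qv.representation B x (c i0)" for x
  have ladd: "l (x + y) = l x + l y" for x y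
    unfolding l_def using Qv.representation_add[OF Bind] Bspan by auto
  have lsum: "l (\<Sum>i\<in>I. f i) = (\<Sum>i\<in>I. l (f i))" for f :: "'i \<Rightarrow> real"
    unfolding l_def using Qv.representation_sum[OF Bind, of I f] Bspan by auto
  have lscale: "l (of_rat q * x) = q * l x" for q x
    unfolding l_def using Qv.representation_scale[OF Bind] Bspan by auto
  have lint: "l (of_int k * x) = of_int k * l x" for k x
    using lscale[of "of_int k" x] by simp
  have lc0: "l (c i0) = 1"
    unfolding l_def using Qv.representation_basis[OF Bind cB] by simp
  have l0: "l 0 = 0" using ladd[of 0 0] by simp
  define r where "r i = (of_rat (l (c i)) :: real)" for i
  have rQ: "\<forall>i\<in>I. r i \<in> \<rat>" unfolding r_def by auto
  have rsum: "(\<Sum>i\<in>I. r i *\<^sub>R v i) = 0"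
  proof (rule vec_eq_iff[THEN iffD2], rule allI)
    fix j
    have kj: "\<forall>i\<in>I. \<exists>k::int. v i $ j = of_int k"
      using vint unfolding int_lattice_def by (auto elim!: Ints_cases)
    then obtain k where k: "\<forall>i\<in>I. v i $ j = of_int (k i)" by metis
    have "(\<Sum>i\<in>I. c i * v i $ j) = 0"
      using arg_cong[OF dep, of "\<lambda>x. x $ j"] by (simp add: sum_component)
    then have "(\<Sum>i\<in>I. of_int (k i) * c i) = 0"
      using k by (simp add: mult.commute)
    then have "l (\<Sum>i\<in>I. of_int (k i) * c i) = 0" using l0 by simp
    then have "(\<Sum>i\<in>I. of_int (k i) * l (c i)) = 0" by (simp add: lsum lint)
    then have "of_rat (\<Sum>i\<in>I. of_int (k i) * l (c i)) = (0::real)" by simp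
    then have "(\<Sum>i\<in>I. r i * of_int (k i)) = 0"
      unfolding r_def by (simp add: of_rat_sum of_rat_mult mult.commute)
    then show "(\<Sum>i\<in>I. r i *\<^sub>R v i) $ j = 0 $ j"
      using k by (simp add: sum_component)
  qed
  obtain D :: int where D: "D > 0" "\<forall>i\<in>I. of_int D * r i \<in> \<int>"
    using rat_common_denom[OF fin rQ] by auto
  show ?thesis
  proof (intro exI[of _ "\<lambda>i. of_int D * r i"] conjI)
    show "\<forall>i\<in>I. of_int D * r i \<in> \<int>" using D by auto
    show "(\<Sum>i\<in>I. (of_int D * r i) *\<^sub>R v i) = 0"
    proof -
      have "(\<Sum>i\<in>I. (of_int D * r i) *\<^sub>R v i) = of_int D *\<^sub>R (\<Sum>i\<in>I. r i *\<^sub>R v i)"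
        by (simp add: scaleR_sum_right)
      then show ?thesis using rsum by simp
    qed
    show "of_int D * r i0 \<noteq> 0" using D lc0 unfolding r_def by simp
  qed
qed

definition findep :: "('i \<Rightarrow> 'a::real_vector) \<Rightarrow> 'i set \<Rightarrow> bool" where
  "findep x I \<longleftrightarrow> (\<forall>c. (\<Sum>i\<in>I. c i *\<^sub>R x i) = 0 \<longrightarrow> (\<forall>i\<in>I. c i = 0))"

lemma findep_inj:
  assumes "findep x I" "finite I"
  shows "inj_on x I"
proof (rule inj_onI, rule ccontr)
  fix i j assume ij: "i \<in> I" "j \<in> I" "x i = x j" "i \<noteq> j"
  define c where "c k = (if k = i then 1 else if k = j then -1 else 0::real)" for k
  have "(\<Sum>k\<in>I. c k *\<^sub>R x k) = (\<Sum>k\<in>{i,j}. c k *\<^sub>R x k)"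
    using ij assms(2) by (intro sum.mono_neutral_right) (auto simp: c_def)
  also have "\<dots> = 0" using ij by (simp add: c_def)
  finally have "c i = 0" using assms(1) ij unfolding findep_def by blast
  then show False by (simp add: c_def)
qed

lemma findep_independent:
  assumes "findep x I" "finite I"
  shows "independent (x ` I)"
proof -
  have inj: "inj_on x I" using findep_inj[OF assms] .
  show ?thesis
  proof (subst dependent_finite)
    show "finite (x ` I)" using assms by simp
    show "\<not> (\<exists>u. (\<exists>v\<in>x ` I. u v \<noteq> 0) \<and> (\<Sum>v\<in>x ` I. u v *\<^sub>R v) = 0)"
    proof
      assume "\<exists>u. (\<exists>v\<in>x ` I. u v \<noteq> 0) \<and> (\<Sum>v\<in>x ` I. u v *\<^sub>R v) = 0"
      then obtain u where u: "\<exists>v\<in>x ` I. u v \<noteq> 0" "(\<Sum>v\<in>x ` I. u v *\<^sub>R v) = 0" by blast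
      have "(\<Sum>i\<in>I. u (x i) *\<^sub>R x i) = 0"
        using u(2) by (simp add: sum.reindex[OF inj])
      then have "\<forall>i\<in>I. u (x i) = 0" using assms(1)[unfolded findep_def, rule_format, of "\<lambda>i. u (x i)"]
        by blast
      then show False using u(1) by blast
    qed
  qed
qed

lemma findep_extend:
  fixes x :: "'i \<Rightarrow> 'a::euclidean_space"
  assumes "findep x I" "finite I"
  shows "\<exists>T::'a \<Rightarrow> 'b::real_vector. linear T \<and> (\<forall>i\<in>I. T (x i) = y i)"
proof -
  have inj: "inj_on x I" using findep_inj[OF assms] .
  obtain g :: "'a \<Rightarrow> 'b" where g: "linear g" "\<forall>v\<in>x ` I. g v = y (inv_into I x v)"
    using real_vector.linear_independent_extend[OF findep_independent[OF assms], where f="\<lambda>v. y (inv_into I x v)"] by blast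
  show ?thesis
  proof (intro exI[of _ g] conjI ballI)
    show "linear g" using g(1) .
    fix i assume i: "i \<in> I"
    have "g (x i) = y (inv_into I x (x i))" using g(2) i by blast
    also have "\<dots> = y i" using inv_into_f_f[OF inj i] by simp
    finally show "g (x i) = y i" .
  qed
qed

lemma findep_linear_image:
  assumes "findep x I" "linear L" "subspace W" "\<forall>i\<in>I. x i \<in> W" "\<forall>w\<in>W. L w = 0 \<longrightarrow> w = 0"
  shows "findep (\<lambda>i. L (x i)) I"
  unfolding findep_def
proof (intro allI impI)
  fix c assume h: "(\<Sum>i\<in>I. c i *\<^sub>R L (x i)) = 0"
  have "L (\<Sum>i\<in>I. c i *\<^sub>R x i) = (\<Sum>i\<in>I. c i *\<^sub>R L (x i))"
    using assms(2) by (simp add: linear_sum linear_scale)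
  moreover have "(\<Sum>i\<in>I. c i *\<^sub>R x i) \<in> W"
    using assms(3,4) by (intro subspace_sum subspace_scale) auto
  ultimately have "(\<Sum>i\<in>I. c i *\<^sub>R x i) = 0" using h assms(5) by auto
  then show "\<forall>i\<in>I. c i = 0" using assms(1) unfolding findep_def by blast
qed

lemma findep_card:
  fixes x :: "'i \<Rightarrow> 'a::euclidean_space"
  assumes "findep x I" "finite I"
  shows "card I \<le> DIM('a)"
proof -
  have "card (x ` I) \<le> DIM('a)"
    using independent_bound[OF findep_independent[OF assms]] by simp
  then show ?thesis using card_image[OF findep_inj[OF assms]] by simp
qed

lemma linear_funpow: "linear (A::'a::real_vector \<Rightarrow> 'a) \<Longrightarrow> linear (A ^^ k)"
proof (induction k)
  case 0 then show ?case using real_vector.linear_id by (metis funpow_0 eq_id_iff)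
next
  case (Suc k)
  then have "linear (A \<circ> (A^^k))" using linear_compose by blast
  then show ?case by (simp add: o_def)
qed

lemma sum_atMost_split: "(\<Sum>k\<le>(m::nat). f k) = (\<Sum>k<m. f k) + (f m :: 'c::comm_monoid_add)"
proof -
  have "{..m} = insert m {..<m}" by auto
  then show ?thesis by (simp add: add.commute)
qed

lemma rec_step:
  fixes A :: "'a::real_vector \<Rightarrow> 'a"
  assumes lA: "linear A" and bm: "b m \<noteq> 0" and rA: "(\<Sum>k\<le>m. b k *\<^sub>R (A^^k) x) = 0"
  shows "(A^^(t+m)) x = - (1 / b m) *\<^sub>R (\<Sum>k<m. b k *\<^sub>R (A^^(t+k)) x)"
proof -
  have "b m *\<^sub>R (A^^m) x = - (\<Sum>k<m. b k *\<^sub>R (A^^k) x)"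
    using rA unfolding sum_atMost_split by (simp add: eq_neg_iff_add_eq_0 add.commute)
  then have xm: "(A^^m) x = - (1 / b m) *\<^sub>R (\<Sum>k<m. b k *\<^sub>R (A^^k) x)"
  proof -
    assume h: "b m *\<^sub>R (A^^m) x = - (\<Sum>k<m. b k *\<^sub>R (A^^k) x)"
    have "(A^^m) x = (1 / b m) *\<^sub>R (b m *\<^sub>R (A^^m) x)" using bm by simp
    also have "\<dots> = - (1 / b m) *\<^sub>R (\<Sum>k<m. b k *\<^sub>R (A^^k) x)" unfolding h by simp
    finally show ?thesis .
  qed
  have lt: "linear (A^^t)" using linear_funpow[OF lA] .
  have "(A^^(t+m)) x = (A^^t) ((A^^m) x)" by (simp add: funpow_add)
  also have "\<dots> = - (1 / b m) *\<^sub>R (\<Sum>k<m. b k *\<^sub>R (A^^t) ((A^^k) x))"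
    unfolding xm using lt by (simp add: linear_sum linear_scale linear_neg)
  also have "\<dots> = - (1 / b m) *\<^sub>R (\<Sum>k<m. b k *\<^sub>R (A^^(t+k)) x)"
    by (simp add: funpow_add)
  finally show ?thesis .
qed

lemma rec_ext:
  fixes A :: "'a::real_vector \<Rightarrow> 'a" and B :: "'b::real_vector \<Rightarrow> 'b" and T :: "'a \<Rightarrow> 'b"
  assumes lA: "linear A" and lB: "linear B" and lT: "linear T" and bm: "b m \<noteq> 0"
    and rA: "(\<Sum>k\<le>m. b k *\<^sub>R (A^^k) x) = 0" and rB: "(\<Sum>k\<le>m. b k *\<^sub>R (B^^k) y) = 0"
    and base: "\<forall>k<m. T ((A^^k) x) = (B^^k) y"
  shows "T ((A^^j) x) = (B^^j) y"
proof (induction j rule: less_induct)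
  case (less j)
  show ?case
  proof (cases "j < m")
    case True then show ?thesis using base by auto
  next
    case False
    define t where "t = j - m"
    have j: "j = t + m" using False t_def by simp
    have "T ((A^^j) x) = - (1 / b m) *\<^sub>R (\<Sum>k<m. b k *\<^sub>R T ((A^^(t+k)) x))"
      unfolding j rec_step[OF lA bm rA] using lT by (simp add: linear_sum linear_scale linear_neg)
    also have "\<dots> = - (1 / b m) *\<^sub>R (\<Sum>k<m. b k *\<^sub>R (B^^(t+k)) y)"
      using less j by (intro arg_cong[where f="\<lambda>z. - (1 / b m) *\<^sub>R z"] sum.cong) auto
    also have "\<dots> = (B^^j) y" unfolding j rec_step[OF lB bm rB] ..
    finally show ?thesis .
  qed
qed

lemma geom_le_zero:
  fixes x K r :: real
  assumes "0 \<le> r" "r < 1" "\<And>j. x \<le> K * r ^ j"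
  shows "x \<le> 0"
proof -
  have "(\<lambda>j. K * r ^ j) \<longlonglongrightarrow> K * 0"
    using assms(1,2) by (intro tendsto_mult tendsto_const LIMSEQ_power_zero) simp
  then show ?thesis using assms(3) by (simp add: LIMSEQ_le_const)
qed

locale PH =
  fixes F :: "real^'d^'d" and S C U :: "(real^'d) set"
    and \<iota> :: "'c::finite \<Rightarrow> 'd" and P :: "real^'d \<Rightarrow> real^'c"
  assumes SL: "SL_int F" and ph: "partially_hyperbolic F S C U"
    and katz: "C \<inter> int_lattice = {0}"
    and spanb: "span (range (\<lambda>j. cproj S C U (axis (\<iota> j) 1))) = C"
    and linP: "linear P"
    and Pc: "\<And>v. P v = P (cproj S C U v)"
    and Pb: "\<And>j. P (cproj S C U (axis (\<iota> j) 1)) = axis j 1"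
begin

definition "dec v = (THE (s, c, u). s \<in> S \<and> c \<in> C \<and> u \<in> U \<and> v = s + c + u)"
definition "ps v = fst (dec v)"
definition "pc v = fst (snd (dec v))"
definition "pu v = snd (snd (dec v))"

lemma cproj_pc: "cproj S C U v = pc v"
  by (simp add: cproj_def pc_def dec_def)

lemma ds: "direct_splitting S C U" using ph unfolding partially_hyperbolic_def by blast
lemma subS: "subspace S" and subC: "subspace C" and subU: "subspace U"
  using ds unfolding direct_splitting_def by auto

lemma dec_ex1: "\<exists>!x. (case x of (s, c, u) \<Rightarrow> s \<in> S \<and> c \<in> C \<and> u \<in> U \<and> v = s + c + u)"
  using ds unfolding direct_splitting_def by blast

lemma dec_props: "ps v \<in> S" "pc v \<in> C" "pu v \<in> U" "ps v + pc v + pu v = v"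
proof -
  have "case dec v of (s, c, u) \<Rightarrow> s \<in> S \<and> c \<in> C \<and> u \<in> U \<and> v = s + c + u"
    unfolding dec_def by (rule theI'[OF dec_ex1])
  then show "ps v \<in> S" "pc v \<in> C" "pu v \<in> U" "ps v + pc v + pu v = v"
    unfolding ps_def pc_def pu_def by (cases "dec v", simp)+
qed

lemma dec_unique:
  assumes "s \<in> S" "c \<in> C" "u \<in> U" "v = s + c + u"
  shows "ps v = s" "pc v = c" "pu v = u"
proof -
  have "dec v = (s, c, u)"
    unfolding dec_def using assms by (intro the1_equality[OF dec_ex1]) auto
  then show "ps v = s" "pc v = c" "pu v = u" unfolding ps_def pc_def pu_def by auto
qed

lemma lin_p: "linear ps" "linear pc" "linear pu"
proof -
  have add: "ps (x + y) = ps x + ps y \<and> pc (x + y) = pc x + pc y \<and> pu (x + y) = pu x + pu y" for x y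
  proof -
    have ex: "ps x + pc x + pu x = x" and ey: "ps y + pc y + pu y = y"
      using dec_props(4) by blast+
    have "x + y = (ps x + pc x + pu x) + (ps y + pc y + pu y)" by (simp only: ex ey)
    also have "\<dots> = (ps x + ps y) + (pc x + pc y) + (pu x + pu y)" by (simp add: algebra_simps)
    finally have "x + y = (ps x + ps y) + (pc x + pc y) + (pu x + pu y)" .
    moreover have "ps x + ps y \<in> S" "pc x + pc y \<in> C" "pu x + pu y \<in> U"
      using dec_props subS subC subU by (auto intro: subspace_add)
    ultimately show ?thesis using dec_unique[of "ps x + ps y" "pc x + pc y" "pu x + pu y" "x + y"] by simp
  qed
  have scl: "ps (a *\<^sub>R x) = a *\<^sub>R ps x \<and> pc (a *\<^sub>R x) = a *\<^sub>R pc x \<and> pu (a *\<^sub>R x) = a *\<^sub>R pu x" for a x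
  proof -
    have "a *\<^sub>R x = a *\<^sub>R (ps x + pc x + pu x)" by (simp only: dec_props(4))
    also have "\<dots> = a *\<^sub>R ps x + a *\<^sub>R pc x + a *\<^sub>R pu x" by (simp add: scaleR_right_distrib)
    finally have "a *\<^sub>R x = a *\<^sub>R ps x + a *\<^sub>R pc x + a *\<^sub>R pu x" .
    moreover have "a *\<^sub>R ps x \<in> S" "a *\<^sub>R pc x \<in> C" "a *\<^sub>R pu x \<in> U"
      using dec_props subS subC subU by (auto intro: subspace_scale)
    ultimately show ?thesis using dec_unique[of "a *\<^sub>R ps x" "a *\<^sub>R pc x" "a *\<^sub>R pu x" "a *\<^sub>R x"] by simp
  qed
  show "linear ps" "linear pc" "linear pu"
    by (rule linearI, use add scl in blast, use add scl in blast)+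
qed

lemma pS: "s \<in> S \<Longrightarrow> ps s = s \<and> pc s = 0 \<and> pu s = 0"
  using dec_unique[of s 0 0 s] subC subU by (auto simp: subspace_0)
lemma pC: "c \<in> C \<Longrightarrow> ps c = 0 \<and> pc c = c \<and> pu c = 0"
  using dec_unique[of 0 c 0 c] subS subU by (auto simp: subspace_0)
lemma pU: "u \<in> U \<Longrightarrow> ps u = 0 \<and> pc u = 0 \<and> pu u = u"
  using dec_unique[of 0 0 u u] subS subC by (auto simp: subspace_0)

definition "fF x = F *v x"

lemma FS: "fF ` S = S" and FC: "fF ` C = C" and FU: "fF ` U = U"
  using ph unfolding partially_hyperbolic_def fF_def by auto

lemma detF: "det F = 1" and Fint: "\<forall>i j. F $ i $ j \<in> \<int>"
  using SL unfolding SL_int_def by auto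

lemma invF: "invertible F" using detF by (simp add: invertible_det_nz)

definition "Fi = (SOME B. F ** B = mat 1 \<and> B ** F = mat 1)"
lemma Fi: "F ** Fi = mat 1" "Fi ** F = mat 1"
proof -
  have "\<exists>B. F ** B = mat 1 \<and> B ** F = mat 1" using invF unfolding invertible_def .
  then have "F ** Fi = mat 1 \<and> Fi ** F = mat 1" unfolding Fi_def by (rule someI_ex)
  then show "F ** Fi = mat 1" "Fi ** F = mat 1" by auto
qed

definition "fFi x = Fi *v x"

lemma fF_fFi: "fF (fFi x) = x" and fFi_fF: "fFi (fF x) = x"
  unfolding fF_def fFi_def by (simp_all add: matrix_vector_mul_assoc Fi)

lemma lin_fF: "linear fF" and lin_fFi: "linear fFi"
  unfolding fF_def fFi_def by (simp_all add: matrix_vector_mul_linear)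

lemma fF_in: "x \<in> S \<Longrightarrow> fF x \<in> S" "x \<in> C \<Longrightarrow> fF x \<in> C" "x \<in> U \<Longrightarrow> fF x \<in> U"
  using FS FC FU by auto

lemma fFi_in: "x \<in> S \<Longrightarrow> fFi x \<in> S" "x \<in> C \<Longrightarrow> fFi x \<in> C" "x \<in> U \<Longrightarrow> fFi x \<in> U"
proof -
  show "x \<in> S \<Longrightarrow> fFi x \<in> S"
  proof -
    assume "x \<in> S" then obtain y where "y \<in> S" "x = fF y" using FS by (metis imageE)
    then show ?thesis by (simp add: fFi_fF)
  qed
  show "x \<in> C \<Longrightarrow> fFi x \<in> C"
  proof -
    assume "x \<in> C" then obtain y where "y \<in> C" "x = fF y" using FC by (metis imageE)
    then show ?thesis by (simp add: fFi_fF)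
  qed
  show "x \<in> U \<Longrightarrow> fFi x \<in> U"
  proof -
    assume "x \<in> U" then obtain y where "y \<in> U" "x = fF y" using FU by (metis imageE)
    then show ?thesis by (simp add: fFi_fF)
  qed
qed

lemma comm_fF: "ps (fF v) = fF (ps v)" "pc (fF v) = fF (pc v)" "pu (fF v) = fF (pu v)"
proof -
  have "fF v = fF (ps v + pc v + pu v)" by (simp only: dec_props(4))
  also have "\<dots> = fF (ps v) + fF (pc v) + fF (pu v)" using lin_fF by (simp add: linear_add)
  finally have eq: "fF v = fF (ps v) + fF (pc v) + fF (pu v)" .
  show "ps (fF v) = fF (ps v)" "pc (fF v) = fF (pc v)" "pu (fF v) = fF (pu v)"
    using dec_unique[OF fF_in(1)[OF dec_props(1)] fF_in(2)[OF dec_props(2)] fF_in(3)[OF dec_props(3)] eq]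
    by simp_all
qed

lemma comm_fFi: "ps (fFi v) = fFi (ps v)" "pc (fFi v) = fFi (pc v)" "pu (fFi v) = fFi (pu v)"
proof -
  have "fFi v = fFi (ps v + pc v + pu v)" by (simp only: dec_props(4))
  also have "\<dots> = fFi (ps v) + fFi (pc v) + fFi (pu v)" using lin_fFi by (simp add: linear_add)
  finally have eq: "fFi v = fFi (ps v) + fFi (pc v) + fFi (pu v)" .
  show "ps (fFi v) = fFi (ps v)" "pc (fFi v) = fFi (pc v)" "pu (fFi v) = fFi (pu v)"
    using dec_unique[OF fFi_in(1)[OF dec_props(1)] fFi_in(2)[OF dec_props(2)] fFi_in(3)[OF dec_props(3)] eq]
    by simp_all
qed

lemma comm_pow:
  "ps ((fF^^k) v) = (fF^^k) (ps v)" "pc ((fF^^k) v) = (fF^^k) (pc v)" "pu ((fF^^k) v) = (fF^^k) (pu v)"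
  "ps ((fFi^^k) v) = (fFi^^k) (ps v)" "pc ((fFi^^k) v) = (fFi^^k) (pc v)" "pu ((fFi^^k) v) = (fFi^^k) (pu v)"
  by (induction k) (simp_all add: comm_fF comm_fFi)

lemma pow_in:
  "x \<in> S \<Longrightarrow> (fF^^k) x \<in> S" "x \<in> C \<Longrightarrow> (fF^^k) x \<in> C" "x \<in> U \<Longrightarrow> (fF^^k) x \<in> U"
  "x \<in> S \<Longrightarrow> (fFi^^k) x \<in> S" "x \<in> C \<Longrightarrow> (fFi^^k) x \<in> C" "x \<in> U \<Longrightarrow> (fFi^^k) x \<in> U"
  by (induction k) (simp_all add: fF_in fFi_in)

lemma pow_inv1: "(fF^^k) ((fFi^^k) x) = x"
proof (induction k arbitrary: x)
  case 0 show ?case by simp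
next
  case (Suc k)
  have e: "(fFi^^Suc k) x = (fFi^^k) (fFi x)" by (simp add: funpow_swap1)
  have "(fF^^Suc k) ((fFi^^Suc k) x) = fF ((fF^^k) ((fFi^^k) (fFi x)))" unfolding e by simp
  also have "\<dots> = x" using Suc by (simp add: fF_fFi)
  finally show ?case .
qed

lemma pow_inv2: "(fFi^^k) ((fF^^k) x) = x"
proof (induction k arbitrary: x)
  case 0 show ?case by simp
next
  case (Suc k)
  have e: "(fF^^Suc k) x = (fF^^k) (fF x)" by (simp add: funpow_swap1)
  have "(fFi^^Suc k) ((fF^^Suc k) x) = fFi ((fFi^^k) ((fF^^k) (fF x)))" unfolding e by simp
  also have "\<dots> = x" using Suc by (simp add: fFi_fF)
  finally show ?case .
qed

end

context PH begin

definition "Am = (SOME A::real^'d^'d. invertible A \<and>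
        (let N = (\<lambda>x. norm (A *v x)) in
          restr_norm N F S < 1 \<and> restr_conorm N F U > 1 \<and>
          restr_norm N F S < restr_conorm N F C \<and> restr_conorm N F U > restr_norm N F C))"

definition "N x = norm (Am *v x)"
definition "lamS = restr_norm N F S"
definition "MC = restr_norm N F C"
definition "mC = restr_conorm N F C"
definition "mU = restr_conorm N F U"

lemma Am_props: "invertible Am" "lamS < mC" "MC < mU"
proof -
  have "\<exists>A::real^'d^'d. invertible A \<and>
        (let N = (\<lambda>x. norm (A *v x)) in
          restr_norm N F S < 1 \<and> restr_conorm N F U > 1 \<and>
          restr_norm N F S < restr_conorm N F C \<and> restr_conorm N F U > restr_norm N F C)"
    using ph unfolding partially_hyperbolic_def by blast
  then have h: "invertible Am \<and>
        (let N = (\<lambda>x. norm (Am *v x)) in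
          restr_norm N F S < 1 \<and> restr_conorm N F U > 1 \<and>
          restr_norm N F S < restr_conorm N F C \<and> restr_conorm N F U > restr_norm N F C)"
    unfolding Am_def by (rule someI_ex)
  have Neq: "(\<lambda>x. norm (Am *v x)) = N" unfolding N_def ..
  show "invertible Am" using h by blast
  show "lamS < mC" "MC < mU" using h unfolding Let_def Neq lamS_def mC_def MC_def mU_def by auto
qed

lemma N_upper: "\<exists>b>0. \<forall>x. N x \<le> b * norm x"
proof -
  obtain b where "b > 0" "\<And>x. norm (Am *v x) \<le> b * norm x"
    using linear_bounded_pos[OF matrix_vector_mul_linear[of Am]] by blast
  then show ?thesis unfolding N_def by blast
qed

lemma N_lower: "\<exists>a>0. \<forall>x. a * norm x \<le> N x"
proof -
  obtain Ai where Ai: "Ai ** Am = mat 1" using Am_props(1) unfolding invertible_def by blast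
  obtain B where B: "B > 0" "\<And>x. norm (Ai *v x) \<le> B * norm x"
    using linear_bounded_pos[OF matrix_vector_mul_linear[of Ai]] by blast
  have "(1/B) * norm x \<le> N x" for x
  proof -
    have "norm x = norm (Ai *v (Am *v x))" by (simp add: matrix_vector_mul_assoc Ai)
    also have "\<dots> \<le> B * N x" unfolding N_def by (rule B(2))
    finally show ?thesis using B(1) by (simp add: field_simps)
  qed
  then show ?thesis using B(1) by (intro exI[of _ "1/B"]) auto
qed

definition "na = (SOME a. a > 0 \<and> (\<forall>x. a * norm x \<le> N x))"
definition "nb = (SOME b. b > 0 \<and> (\<forall>x. N x \<le> b * norm x))"

lemma na: "na > 0" "na * norm x \<le> N x"
  using someI_ex[OF N_lower] unfolding na_def[symmetric] by auto
lemma nb: "nb > 0" "N x \<le> nb * norm x"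
  using someI_ex[OF N_upper] unfolding nb_def[symmetric] by auto

lemma N_pos: "x \<noteq> 0 \<Longrightarrow> N x > 0"
  using na(1) na(2)[of x] by (smt (verit) mult_pos_pos zero_less_norm_iff)
lemma N_0: "N 0 = 0" unfolding N_def by simp
lemma N_nonneg: "N x \<ge> 0" unfolding N_def by simp

lemma ratio_bdd: "\<exists>M. \<forall>x. x \<noteq> 0 \<longrightarrow> N (fF x) / N x \<le> M"
proof -
  obtain BF where BF: "BF > 0" "\<And>x. norm (fF x) \<le> BF * norm x"
    using linear_bounded_pos[OF lin_fF] by blast
  have "N (fF x) / N x \<le> nb * BF / na" if "x \<noteq> 0" for x
  proof -
    have Np: "N x > 0" using N_pos[OF that] .
    have "N (fF x) \<le> nb * (BF * norm x)"
      using nb(2)[of "fF x"] BF(2)[of x] nb(1) by (smt (verit) mult_left_mono)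
    also have "\<dots> = (nb * BF / na) * (na * norm x)" using na(1) by simp
    also have "\<dots> \<le> (nb * BF / na) * N x"
      using na(1) nb(1) BF(1) na(2)[of x] by (intro mult_left_mono) auto
    finally show ?thesis using Np by (simp add: divide_le_eq)
  qed
  then show ?thesis by blast
qed

lemma bddA: "bdd_above {N (F *v x) / N x | x. x \<in> V \<and> x \<noteq> 0}"
proof -
  obtain M where "\<forall>x. x \<noteq> 0 \<longrightarrow> N (fF x) / N x \<le> M" using ratio_bdd by blast
  then show ?thesis unfolding bdd_above_def fF_def by blast
qed

lemma bddB: "bdd_below {N (F *v x) / N x | x. x \<in> V \<and> x \<noteq> 0}"
  unfolding bdd_below_def using N_nonneg by (intro exI[of _ 0]) auto

lemma S_rate: "s \<in> S \<Longrightarrow> N (fF s) \<le> lamS * N s"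
proof (cases "s = 0")
  case True then show ?thesis using lin_fF by (simp add: N_0 linear_0)
next
  case False
  assume s: "s \<in> S"
  have "N (fF s) / N s \<le> lamS"
    unfolding lamS_def restr_norm_def fF_def by (rule cSup_upper[OF _ bddA]) (use s False in blast)
  then show ?thesis using N_pos[OF False] by (simp add: divide_le_eq)
qed

lemma C_rate_up: "c \<in> C \<Longrightarrow> N (fF c) \<le> MC * N c"
proof (cases "c = 0")
  case True then show ?thesis using lin_fF by (simp add: N_0 linear_0)
next
  case False
  assume s: "c \<in> C"
  have "N (fF c) / N c \<le> MC"
    unfolding MC_def restr_norm_def fF_def by (rule cSup_upper[OF _ bddA]) (use s False in blast)
  then show ?thesis using N_pos[OF False] by (simp add: divide_le_eq)
qed

lemma C_rate_low: "c \<in> C \<Longrightarrow> mC * N c \<le> N (fF c)"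
proof (cases "c = 0")
  case True then show ?thesis using lin_fF by (simp add: N_0 linear_0)
next
  case False
  assume s: "c \<in> C"
  have "mC \<le> N (fF c) / N c"
    unfolding mC_def restr_conorm_def fF_def by (rule cInf_lower[OF _ bddB]) (use s False in blast)
  then show ?thesis using N_pos[OF False] by (simp add: le_divide_eq)
qed

lemma U_rate: "u \<in> U \<Longrightarrow> mU * N u \<le> N (fF u)"
proof (cases "u = 0")
  case True then show ?thesis using lin_fF by (simp add: N_0 linear_0)
next
  case False
  assume s: "u \<in> U"
  have "mU \<le> N (fF u) / N u"
    unfolding mU_def restr_conorm_def fF_def by (rule cInf_lower[OF _ bddB]) (use s False in blast)
  then show ?thesis using N_pos[OF False] by (simp add: le_divide_eq)
qed

lemma nonzero_in: "V \<noteq> {0} \<Longrightarrow> subspace V \<Longrightarrow> \<exists>v\<in>V. v \<noteq> 0"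
  using subspace_0 by blast

lemma lamS_nonneg: "lamS \<ge> 0"
proof -
  have "S \<noteq> {0}" using ph unfolding partially_hyperbolic_def by blast
  then obtain s where s: "s \<in> S" "s \<noteq> 0" using nonzero_in subS by blast
  have "N (fF s) \<le> lamS * N s" using S_rate[OF s(1)] .
  then show ?thesis using N_pos[OF s(2)] N_nonneg[of "fF s"]
    by (smt (verit) mult_neg_pos)
qed

lemma MC_nonneg: "MC \<ge> 0"
proof -
  have "C \<noteq> {0}" using ph unfolding partially_hyperbolic_def by blast
  then obtain s where s: "s \<in> C" "s \<noteq> 0" using nonzero_in subC by blast
  have "N (fF s) \<le> MC * N s" using C_rate_up[OF s(1)] .
  then show ?thesis using N_pos[OF s(2)] N_nonneg[of "fF s"]
    by (smt (verit) mult_neg_pos)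
qed

lemma mC_pos: "mC > 0" using lamS_nonneg Am_props(2) by simp
lemma mU_pos: "mU > 0" using MC_nonneg Am_props(3) by simp

lemma S_pow: "s \<in> S \<Longrightarrow> N ((fF^^k) s) \<le> lamS^k * N s"
proof (induction k)
  case 0 then show ?case by simp
next
  case (Suc k)
  have "N ((fF^^Suc k) s) = N (fF ((fF^^k) s))" by simp
  also have "\<dots> \<le> lamS * N ((fF^^k) s)" using S_rate pow_in(1)[OF Suc.prems] by blast
  also have "\<dots> \<le> lamS * (lamS^k * N s)" using Suc lamS_nonneg by (intro mult_left_mono) auto
  finally show ?case by simp
qed

lemma C_pow_up: "c \<in> C \<Longrightarrow> N ((fF^^k) c) \<le> MC^k * N c"
proof (induction k)
  case 0 then show ?case by simp
next
  case (Suc k)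
  have "N ((fF^^Suc k) c) = N (fF ((fF^^k) c))" by simp
  also have "\<dots> \<le> MC * N ((fF^^k) c)" using C_rate_up pow_in(2)[OF Suc.prems] by blast
  also have "\<dots> \<le> MC * (MC^k * N c)" using Suc MC_nonneg by (intro mult_left_mono) auto
  finally show ?case by simp
qed

lemma C_pow_low: "c \<in> C \<Longrightarrow> mC^k * N c \<le> N ((fF^^k) c)"
proof (induction k)
  case 0 then show ?case by simp
next
  case (Suc k)
  have "mC^Suc k * N c = mC * (mC^k * N c)" by simp
  also have "\<dots> \<le> mC * N ((fF^^k) c)" using Suc mC_pos by (intro mult_left_mono) auto
  also have "\<dots> \<le> N (fF ((fF^^k) c))" using C_rate_low pow_in(2)[OF Suc.prems] by blast
  finally show ?case by simp
qed

lemma U_pow: "u \<in> U \<Longrightarrow> mU^k * N u \<le> N ((fF^^k) u)"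
proof (induction k)
  case 0 then show ?case by simp
next
  case (Suc k)
  have "mU^Suc k * N u = mU * (mU^k * N u)" by simp
  also have "\<dots> \<le> mU * N ((fF^^k) u)" using Suc mU_pos by (intro mult_left_mono) auto
  also have "\<dots> \<le> N (fF ((fF^^k) u))" using U_rate pow_in(3)[OF Suc.prems] by blast
  finally show ?case by simp
qed

lemma E_S_back: "s \<in> S \<Longrightarrow> na * norm s \<le> lamS^k * (nb * norm ((fFi^^k) s))"
proof -
  assume s: "s \<in> S"
  have "na * norm s \<le> N s" by (rule na(2))
  also have "\<dots> = N ((fF^^k) ((fFi^^k) s))" by (simp add: pow_inv1)
  also have "\<dots> \<le> lamS^k * N ((fFi^^k) s)" using S_pow pow_in(4)[OF s] by blast
  also have "\<dots> \<le> lamS^k * (nb * norm ((fFi^^k) s))"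
    using nb(2) lamS_nonneg by (intro mult_left_mono) auto
  finally show ?thesis .
qed

lemma E_S_fwd: "s \<in> S \<Longrightarrow> na * norm ((fF^^k) s) \<le> lamS^k * (nb * norm s)"
proof -
  assume s: "s \<in> S"
  have "na * norm ((fF^^k) s) \<le> N ((fF^^k) s)" by (rule na(2))
  also have "\<dots> \<le> lamS^k * N s" using S_pow s by blast
  also have "\<dots> \<le> lamS^k * (nb * norm s)"
    using nb(2) lamS_nonneg by (intro mult_left_mono) auto
  finally show ?thesis .
qed

lemma E_U_fwd: "u \<in> U \<Longrightarrow> mU^k * (na * norm u) \<le> nb * norm ((fF^^k) u)"
proof -
  assume u: "u \<in> U"
  have "mU^k * (na * norm u) \<le> mU^k * N u"
    using na(2) mU_pos by (intro mult_left_mono) auto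
  also have "\<dots> \<le> N ((fF^^k) u)" using U_pow u by blast
  also have "\<dots> \<le> nb * norm ((fF^^k) u)" by (rule nb(2))
  finally show ?thesis .
qed

lemma E_U_back: "u \<in> U \<Longrightarrow> mU^k * (na * norm ((fFi^^k) u)) \<le> nb * norm u"
proof -
  assume u: "u \<in> U"
  have "mU^k * (na * norm ((fFi^^k) u)) \<le> nb * norm ((fF^^k) ((fFi^^k) u))"
    using E_U_fwd pow_in(6)[OF u] by blast
  then show ?thesis by (simp add: pow_inv1)
qed

lemma E_C_fwd: "c \<in> C \<Longrightarrow> na * norm ((fF^^k) c) \<le> MC^k * (nb * norm c)"
proof -
  assume c: "c \<in> C"
  have "na * norm ((fF^^k) c) \<le> N ((fF^^k) c)" by (rule na(2))
  also have "\<dots> \<le> MC^k * N c" using C_pow_up c by blast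
  also have "\<dots> \<le> MC^k * (nb * norm c)"
    using nb(2) MC_nonneg by (intro mult_left_mono) auto
  finally show ?thesis .
qed

lemma E_C_back: "c \<in> C \<Longrightarrow> mC^k * (na * norm ((fFi^^k) c)) \<le> nb * norm c"
proof -
  assume c: "c \<in> C"
  have "mC^k * (na * norm ((fFi^^k) c)) \<le> mC^k * N ((fFi^^k) c)"
    using na(2) mC_pos by (intro mult_left_mono) auto
  also have "\<dots> \<le> N ((fF^^k) ((fFi^^k) c))" using C_pow_low pow_in(5)[OF c] by blast
  also have "\<dots> = N c" by (simp add: pow_inv1)
  also have "\<dots> \<le> nb * norm c" by (rule nb(2))
  finally show ?thesis .
qed

end

context PH begin

definition "G f = transpose F *v f"
definition "Gi f = transpose Fi *v f"

lemma G_dot: "G f \<bullet> x = f \<bullet> fF x"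
  unfolding G_def fF_def by (simp add: transpose_matrix_vector dot_lmul_matrix)
lemma Gi_dot: "Gi f \<bullet> x = f \<bullet> fFi x"
  unfolding Gi_def fFi_def by (simp add: transpose_matrix_vector dot_lmul_matrix)

lemma lin_G: "linear G"
proof -
  have "G = (*v) (transpose F)" unfolding G_def by (rule ext) simp
  then show ?thesis using matrix_vector_mul_linear by metis
qed
lemma lin_Gi: "linear Gi"
proof -
  have "Gi = (*v) (transpose Fi)" unfolding Gi_def by (rule ext) simp
  then show ?thesis using matrix_vector_mul_linear by metis
qed

lemma Gpow_dot: "(G^^k) f \<bullet> x = f \<bullet> (fF^^k) x"
proof (induction k arbitrary: x)
  case 0 then show ?case by simp
next
  case (Suc k)
  have "(G^^Suc k) f \<bullet> x = (G^^k) f \<bullet> fF x" by (simp add: G_dot)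
  also have "\<dots> = f \<bullet> (fF^^k) (fF x)" by (rule Suc)
  also have "\<dots> = f \<bullet> (fF^^Suc k) x" by (simp add: funpow_swap1)
  finally show ?case .
qed

lemma Gipow_dot: "(Gi^^k) f \<bullet> x = f \<bullet> (fFi^^k) x"
proof (induction k arbitrary: x)
  case 0 then show ?case by simp
next
  case (Suc k)
  have "(Gi^^Suc k) f \<bullet> x = (Gi^^k) f \<bullet> fFi x" by (simp add: Gi_dot)
  also have "\<dots> = f \<bullet> (fFi^^k) (fFi x)" by (rule Suc)
  also have "\<dots> = f \<bullet> (fFi^^Suc k) x" by (simp add: funpow_swap1)
  finally show ?case .
qed

lemma G_Gi: "G (Gi f) = f" and Gi_G: "Gi (G f) = f"
proof -
  have "\<forall>z. G (Gi f) \<bullet> z = f \<bullet> z" by (simp add: G_dot Gi_dot fFi_fF)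
  then show "G (Gi f) = f" using vector_eq_rdot by blast
  have "\<forall>z. Gi (G f) \<bullet> z = f \<bullet> z" by (simp add: G_dot Gi_dot fF_fFi)
  then show "Gi (G f) = f" using vector_eq_rdot by blast
qed

lemma Gpow_inv1: "(G^^k) ((Gi^^k) x) = x"
proof (induction k arbitrary: x)
  case 0 show ?case by simp
next
  case (Suc k)
  have e: "(Gi^^Suc k) x = (Gi^^k) (Gi x)" by (simp add: funpow_swap1)
  have "(G^^Suc k) ((Gi^^Suc k) x) = G ((G^^k) ((Gi^^k) (Gi x)))" unfolding e by simp
  also have "\<dots> = x" using Suc by (simp add: G_Gi)
  finally show ?case .
qed

lemma Gpow_inv2: "(Gi^^k) ((G^^k) x) = x"
proof (induction k arbitrary: x)
  case 0 show ?case by simp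
next
  case (Suc k)
  have e: "(G^^Suc k) x = (G^^k) (G x)" by (simp add: funpow_swap1)
  have "(Gi^^Suc k) ((G^^Suc k) x) = Gi ((Gi^^k) ((G^^k) (G x)))" unfolding e by simp
  also have "\<dots> = x" using Suc by (simp add: Gi_G)
  finally show ?case .
qed

definition "ann h \<longleftrightarrow> (\<forall>s\<in>S. h \<bullet> s = 0) \<and> (\<forall>u\<in>U. h \<bullet> u = 0)"

lemma ann_pc: "ann h \<Longrightarrow> h \<bullet> v = h \<bullet> pc v"
proof -
  assume h: "ann h"
  have "h \<bullet> v = h \<bullet> (ps v + pc v + pu v)" by (simp only: dec_props(4))
  also have "\<dots> = h \<bullet> ps v + h \<bullet> pc v + h \<bullet> pu v" by (simp add: inner_add_right)
  also have "\<dots> = h \<bullet> pc v" using h dec_props(1,3) unfolding ann_def by simp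
  finally show ?thesis .
qed

definition "Q f = (\<chi> i. f \<bullet> pc (axis i 1))"

lemma Q_dot: "Q f \<bullet> v = f \<bullet> pc v"
proof -
  have "pc v = pc (\<Sum>i\<in>UNIV. v $ i *\<^sub>R axis i 1)"
    using basis_expansion[of v] by (simp add: scalar_mult_eq_scaleR)
  also have "\<dots> = (\<Sum>i\<in>UNIV. v $ i *\<^sub>R pc (axis i 1))"
    using lin_p(2) by (simp add: linear_sum linear_scale)
  finally have "f \<bullet> pc v = (\<Sum>i\<in>UNIV. v $ i * (f \<bullet> pc (axis i 1)))"
    by (simp add: inner_sum_right)
  moreover have "Q f \<bullet> v = (\<Sum>i\<in>UNIV. (f \<bullet> pc (axis i 1)) * v $ i)"
    unfolding Q_def inner_vec_def by simp
  ultimately show ?thesis by (simp add: mult.commute)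
qed

lemma lin_Q: "linear Q"
proof (rule linearI)
  fix x y show "Q (x + y) = Q x + Q y"
    using vector_eq_rdot by (metis Q_dot inner_add_left)
next
  fix r x show "Q (r *\<^sub>R x) = r *\<^sub>R Q x"
    using vector_eq_rdot by (metis Q_dot inner_scaleR_left)
qed

lemma ann_Q: "ann (Q f)"
  unfolding ann_def Q_dot using pS pU by simp

lemma Q_ann: "ann h \<Longrightarrow> Q h = h"
  using vector_eq_rdot Q_dot ann_pc by metis

lemma Q_G: "Q (G f) = G (Q f)"
proof -
  have "Q (G f) \<bullet> v = G (Q f) \<bullet> v" for v
    by (simp add: Q_dot G_dot comm_fF)
  then show ?thesis using vector_eq_rdot by blast
qed

lemma Q_Gi: "Q (Gi f) = Gi (Q f)"
proof -
  have "Q (Gi f) \<bullet> v = Gi (Q f) \<bullet> v" for v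
    by (simp add: Q_dot Gi_dot comm_fFi)
  then show ?thesis using vector_eq_rdot by blast
qed

lemma Q_Gpow: "Q ((G^^k) f) = (G^^k) (Q f)"
  by (induction k) (simp_all add: Q_G)
lemma Q_Gipow: "Q ((Gi^^k) f) = (Gi^^k) (Q f)"
  by (induction k) (simp_all add: Q_Gi)

definition "Bpc = (SOME B. B > 0 \<and> (\<forall>x. norm (pc x) \<le> B * norm x))"
lemma Bpc: "Bpc > 0" "norm (pc x) \<le> Bpc * norm x"
proof -
  have "\<exists>B. B > 0 \<and> (\<forall>x. norm (pc x) \<le> B * norm x)"
    using linear_bounded_pos[OF lin_p(2)] by blast
  then have "Bpc > 0 \<and> (\<forall>x. norm (pc x) \<le> Bpc * norm x)" unfolding Bpc_def by (rule someI_ex)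
  then show "Bpc > 0" "norm (pc x) \<le> Bpc * norm x" by auto
qed

definition "kap = nb * Bpc / na"
lemma kap_pos: "kap > 0" unfolding kap_def using na(1) nb(1) Bpc(1) by simp

lemma dual_fwd: "ann h \<Longrightarrow> norm ((G^^k) h) \<le> kap * MC^k * norm h"
proof -
  assume h: "ann h"
  define g where "g = (G^^k) h"
  have "norm g * norm g = g \<bullet> g" by (simp add: norm_eq_sqrt_inner power2_eq_square[symmetric])
  also have "\<dots> = h \<bullet> (fF^^k) g" unfolding g_def by (simp add: Gpow_dot)
  also have "\<dots> = h \<bullet> (fF^^k) (pc g)" using ann_pc[OF h] comm_pow(2) by metis
  also have "\<dots> \<le> norm h * norm ((fF^^k) (pc g))" by (rule norm_cauchy_schwarz)
  also have "\<dots> \<le> norm h * (MC^k * (nb * norm (pc g)) / na)"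
  proof -
    have "na * norm ((fF^^k) (pc g)) \<le> MC^k * (nb * norm (pc g))"
      using E_C_fwd dec_props(2) by blast
    then have "norm ((fF^^k) (pc g)) \<le> MC^k * (nb * norm (pc g)) / na"
      using na(1) by (simp add: le_divide_eq mult.commute)
    then show ?thesis by (intro mult_left_mono) auto
  qed
  also have "\<dots> \<le> norm h * (MC^k * (nb * (Bpc * norm g)) / na)"
    using Bpc(2)[of g] MC_nonneg nb(1) na(1)
    by (intro mult_left_mono divide_right_mono mult_left_mono) auto
  also have "\<dots> = (kap * MC^k * norm h) * norm g" unfolding kap_def by simp
  finally have *: "norm g * norm g \<le> (kap * MC^k * norm h) * norm g" .
  show ?thesis
  proof (cases "norm g = 0")
    case True then show ?thesis using kap_pos MC_nonneg unfolding g_def by simp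
  next
    case False then have "norm g > 0" by simp
    with * show ?thesis unfolding g_def by (simp add: mult_le_cancel_right)
  qed
qed

lemma dual_back: "ann h \<Longrightarrow> mC^k * norm ((Gi^^k) h) \<le> kap * norm h"
proof -
  assume h: "ann h"
  define g where "g = (Gi^^k) h"
  have "mC^k * (norm g * norm g) = mC^k * (g \<bullet> g)"
    by (simp add: norm_eq_sqrt_inner power2_eq_square[symmetric])
  also have "\<dots> = mC^k * (h \<bullet> (fFi^^k) g)" unfolding g_def by (simp add: Gipow_dot)
  also have "\<dots> = mC^k * (h \<bullet> (fFi^^k) (pc g))" using ann_pc[OF h] comm_pow(5) by metis
  also have "\<dots> \<le> mC^k * (norm h * norm ((fFi^^k) (pc g)))"
    using mC_pos by (intro mult_left_mono norm_cauchy_schwarz) auto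
  also have "\<dots> = norm h * (mC^k * norm ((fFi^^k) (pc g)))" by simp
  also have "\<dots> \<le> norm h * (nb * norm (pc g) / na)"
  proof -
    have "mC^k * (na * norm ((fFi^^k) (pc g))) \<le> nb * norm (pc g)"
      using E_C_back dec_props(2) by blast
    then have "mC^k * norm ((fFi^^k) (pc g)) \<le> nb * norm (pc g) / na"
      using na(1) by (simp add: le_divide_eq mult.commute mult.left_commute)
    then show ?thesis by (intro mult_left_mono) auto
  qed
  also have "\<dots> \<le> norm h * (nb * (Bpc * norm g) / na)"
    using Bpc(2)[of g] nb(1) na(1)
    by (intro mult_left_mono divide_right_mono) auto
  also have "\<dots> = (kap * norm h) * norm g" unfolding kap_def by simp
  finally have *: "(mC^k * norm g) * norm g \<le> (kap * norm h) * norm g" by simp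
  show ?thesis
  proof (cases "norm g = 0")
    case True then show ?thesis using kap_pos unfolding g_def by simp
  next
    case False then have "norm g > 0" by simp
    with * show ?thesis unfolding g_def by (simp add: mult_le_cancel_right)
  qed
qed

lemma ann_G: "ann h \<Longrightarrow> ann (G h)" and ann_Gi: "ann h \<Longrightarrow> ann (Gi h)"
  unfolding ann_def by (simp_all add: G_dot Gi_dot fF_in fFi_in)

lemma int_G: "n \<in> int_lattice \<Longrightarrow> G n \<in> int_lattice"
  unfolding int_lattice_def G_def using Fint
  by (auto simp: matrix_vector_mult_def transpose_def intro!: Ints_sum Ints_mult)

lemma int_Gpow: "n \<in> int_lattice \<Longrightarrow> (G^^k) n \<in> int_lattice"
  by (induction k) (simp_all add: int_G)

lemma int_fF: "n \<in> int_lattice \<Longrightarrow> fF n \<in> int_lattice"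
  unfolding int_lattice_def fF_def using Fint
  by (auto simp: matrix_vector_mult_def intro!: Ints_sum Ints_mult)

lemma int_fFpow: "n \<in> int_lattice \<Longrightarrow> (fF^^k) n \<in> int_lattice"
  by (induction k) (simp_all add: int_fF)

end

lemma geom_kill:
  fixes x K p q :: real
  assumes "0 \<le> p" "p < q" "\<And>j. q^j * x \<le> K * p^j"
  shows "x \<le> 0"
proof (rule geom_le_zero[of "p / q" x K])
  have q: "q > 0" using assms by simp
  show "0 \<le> p / q" "p / q < 1" using assms q by auto
  fix j
  have "q^j * x \<le> K * p^j" by (rule assms(3))
  then have "x \<le> K * p^j / q^j" using q by (simp add: le_divide_eq mult.commute)
  then show "x \<le> K * (p / q)^j" by (simp add: power_divide)
qed

lemma funpow_inv_gen:
  fixes A Ai :: "'a \<Rightarrow> 'a"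
  assumes "\<And>y. Ai (A y) = y"
  shows "(Ai^^k) ((A^^k) y) = y"
proof (induction k arbitrary: y)
  case 0 show ?case by simp
next
  case (Suc k)
  have e: "(A^^Suc k) y = (A^^k) (A y)" by (simp add: funpow_swap1)
  have "(Ai^^Suc k) ((A^^Suc k) y) = Ai ((Ai^^k) ((A^^k) (A y)))" unfolding e by simp
  also have "\<dots> = y" using Suc assms by simp
  finally show ?case .
qed

lemma funpow_diff_gen:
  fixes A Ai :: "'a \<Rightarrow> 'a"
  assumes "\<And>y. Ai (A y) = y" "k \<le> m"
  shows "(Ai^^m) ((A^^k) y) = (Ai^^(m-k)) y"
proof -
  have "(Ai^^m) = (Ai^^(m-k)) \<circ> (Ai^^k)" using assms(2) by (simp add: funpow_add[symmetric])
  then show ?thesis using funpow_inv_gen[of Ai A, OF assms(1)] by simp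
qed

lemma rev_rec:
  fixes A Ai :: "'a::real_vector \<Rightarrow> 'a"
  assumes lAi: "linear Ai" and inv: "\<And>y. Ai (A y) = y"
    and rec: "(\<Sum>k\<le>m. b k *\<^sub>R (A^^k) x) = 0"
  shows "(\<Sum>k\<le>m. b (m - k) *\<^sub>R (Ai^^k) x) = 0"
proof -
  have l: "linear (Ai^^m)" using linear_funpow[OF lAi] .
  have "0 = (Ai^^m) (\<Sum>k\<le>m. b k *\<^sub>R (A^^k) x)" using rec l by (simp add: linear_0)
  also have "\<dots> = (\<Sum>k\<le>m. b k *\<^sub>R (Ai^^m) ((A^^k) x))" using l by (simp add: linear_sum linear_scale)
  also have "\<dots> = (\<Sum>k\<le>m. b k *\<^sub>R (Ai^^(m-k)) x)"
    using funpow_diff_gen[of Ai A, OF inv] by (intro sum.cong) auto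
  also have "\<dots> = (\<Sum>k=0..m. b k *\<^sub>R (Ai^^(m-k)) x)" by (simp add: atLeast0AtMost)
  also have "\<dots> = (\<Sum>k=0..m. b (m + 0 - k) *\<^sub>R (Ai^^(m - (m + 0 - k))) x)"
    by (rule sum.atLeastAtMost_rev)
  also have "\<dots> = (\<Sum>k\<le>m. b (m - k) *\<^sub>R (Ai^^k) x)"
    by (simp add: atLeast0AtMost)
  finally show ?thesis by simp
qed

lemma sum_rev_lessThan: "(\<Sum>k<m. f (m - 1 - k)) = (\<Sum>k<(m::nat). f k)"
  using sum.nat_diff_reindex[of f m] by simp

lemma back_findep:
  fixes A Ai :: "'a::real_vector \<Rightarrow> 'a"
  assumes lA: "linear A" and inv: "\<And>y. A (Ai y) = y"
    and fd: "findep (\<lambda>k. (A^^k) x) {..<m}"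
  shows "findep (\<lambda>k. (Ai^^k) x) {..<m}"
  unfolding findep_def
proof (intro allI impI)
  fix c assume h: "(\<Sum>k<m. c k *\<^sub>R (Ai^^k) x) = 0"
  define f where "f j = c (m - 1 - j) *\<^sub>R (A^^j) x" for j
  have l: "linear (A^^(m-1))" using linear_funpow[OF lA] .
  have "0 = (A^^(m-1)) (\<Sum>k<m. c k *\<^sub>R (Ai^^k) x)" using h l by (simp add: linear_0)
  also have "\<dots> = (\<Sum>k<m. c k *\<^sub>R (A^^(m-1)) ((Ai^^k) x))" using l by (simp add: linear_sum linear_scale)
  also have "\<dots> = (\<Sum>k<m. c k *\<^sub>R (A^^(m-1-k)) x)"
    using funpow_diff_gen[of A Ai, OF inv] by (intro sum.cong) auto
  also have "\<dots> = (\<Sum>k<m. f (m - 1 - k))"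
    unfolding f_def by (intro sum.cong) auto
  also have "\<dots> = (\<Sum>k<m. f k)" by (rule sum_rev_lessThan)
  finally have "(\<Sum>j<m. c (m - 1 - j) *\<^sub>R (A^^j) x) = 0" unfolding f_def by simp
  then have z: "\<forall>j<m. c (m - 1 - j) = 0"
    using fd[unfolded findep_def, rule_format, of "\<lambda>j. c (m - 1 - j)"] by simp
  show "\<forall>k\<in>{..<m}. c k = 0"
  proof
    fix k assume "k \<in> {..<m}"
    then have "m - 1 - k < m" "m - 1 - (m - 1 - k) = k" by auto
    then show "c k = 0" using z by metis
  qed
qed

context PH begin

lemma DIM_d: "DIM(real^'d) = CARD('d)" by simp

lemma cyc:
  assumes nint: "n \<in> int_lattice" and nz: "n \<noteq> 0"
  shows "\<exists>m b. 0 < m \<and> m \<le> CARD('d) \<and> b m \<noteq> 0 \<and> b 0 \<noteq> 0 \<and> (\<forall>k. b k \<in> \<int>) \<and>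
     (\<Sum>k\<le>m. b k *\<^sub>R (G^^k) n) = 0 \<and> findep (\<lambda>k. (G^^k) n) {..<m}"
proof -
  define X where "X k = (G^^k) n" for k
  define Dep where "Dep m \<longleftrightarrow> \<not> findep X {..m}" for m
  have "Dep CARD('d)"
  proof -
    have "\<not> card {..CARD('d)} \<le> DIM(real^'d)" by simp
    then show ?thesis unfolding Dep_def using findep_card[of X "{..CARD('d)}"] by auto
  qed
  define m where "m = (LEAST m. Dep m)"
  have Dm: "Dep m" unfolding m_def by (rule LeastI) fact
  have mle: "m \<le> CARD('d)" unfolding m_def by (rule Least_le) fact
  have notless: "\<not> Dep k" if "k < m" for k using not_less_Least[OF that[unfolded m_def]] by blast
  obtain c where c: "(\<Sum>k\<le>m. c k *\<^sub>R X k) = 0" "\<exists>k\<in>{..m}. c k \<noteq> 0"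
    using Dm unfolding Dep_def findep_def by blast
  have m0: "m \<noteq> 0"
  proof
    assume "m = 0"
    then have "c 0 *\<^sub>R n = 0" "c 0 \<noteq> 0" using c by (auto simp: X_def)
    then show False using nz by simp
  qed
  have fd: "findep X {..<m}"
  proof -
    have "{..<m} = {..m-1}" using m0 by auto
    moreover have "\<not> Dep (m - 1)" using notless m0 by simp
    ultimately show ?thesis unfolding Dep_def by simp
  qed
  have cm: "c m \<noteq> 0"
  proof
    assume cm0: "c m = 0"
    then have "(\<Sum>k<m. c k *\<^sub>R X k) = 0" using c(1) by (simp add: sum_atMost_split)
    then have "\<forall>k\<in>{..<m}. c k = 0" using fd unfolding findep_def by blast
    then show False using c(2) cm0 by (metis atMost_iff lessThan_iff le_neq_implies_less)
  qed
  have Xint: "\<forall>k\<in>{..m}. X k \<in> int_lattice" unfolding X_def using int_Gpow[OF nint] by blast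
  obtain c' where c': "\<forall>k\<in>{..m}. c' k \<in> \<int>" "(\<Sum>k\<le>m. c' k *\<^sub>R X k) = 0" "c' m \<noteq> 0"
    using int_dep[of "{..m}" X c m] Xint c(1) cm by auto
  define b where "b k = (if k \<le> m then c' k else 0)" for k
  have bsum: "(\<Sum>k\<le>m. b k *\<^sub>R X k) = 0" using c'(2) unfolding b_def by simp
  have bint: "\<forall>k. b k \<in> \<int>" using c'(1) unfolding b_def by auto
  have bm: "b m \<noteq> 0" using c'(3) unfolding b_def by simp
  have b0: "b 0 \<noteq> 0"
  proof
    assume b00: "b 0 = 0"
    obtain m' where m': "m = Suc m'" using m0 by (cases m) auto
    have "0 = (\<Sum>k\<le>Suc m'. b k *\<^sub>R X k)" using bsum m' by simp
    also have "\<dots> = b 0 *\<^sub>R X 0 + (\<Sum>i\<le>m'. b (Suc i) *\<^sub>R X (Suc i))" by (rule sum.atMost_Suc_shift)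
    also have "\<dots> = (\<Sum>i\<le>m'. b (Suc i) *\<^sub>R G (X i))" using b00 by (simp add: X_def)
    also have "\<dots> = G (\<Sum>i\<le>m'. b (Suc i) *\<^sub>R X i)" using lin_G by (simp add: linear_sum linear_scale)
    finally have "Gi 0 = Gi (G (\<Sum>i\<le>m'. b (Suc i) *\<^sub>R X i))" by simp
    then have "(\<Sum>i<m. b (Suc i) *\<^sub>R X i) = 0"
      using lin_Gi m' by (simp add: Gi_G linear_0 lessThan_Suc_atMost)
    then have "\<forall>i\<in>{..<m}. b (Suc i) = 0" using fd[unfolded findep_def, rule_format, of "\<lambda>i. b (Suc i)"] by blast
    then have "b (Suc m') = 0" using m' by simp
    then show False using bm m' by simp
  qed
  show ?thesis using m0 mle bm b0 bint bsum fd unfolding X_def by blast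
qed

end

context PH begin

lemma S_kill:
  assumes annn: "ann n" and bm: "b m \<noteq> 0" and b0: "b 0 \<noteq> 0"
    and recn: "(\<Sum>k\<le>m. b k *\<^sub>R (G^^k) n) = 0" and fd: "findep (\<lambda>k. (G^^k) n) {..<m}"
    and s: "s \<in> S" and recs: "(\<Sum>k\<le>m. b k *\<^sub>R (fF^^k) s) = 0"
  shows "s = 0"
proof -
  have recn': "(\<Sum>k\<le>m. b (m - k) *\<^sub>R (Gi^^k) n) = 0" using rev_rec[OF lin_Gi Gi_G recn] .
  have recs': "(\<Sum>k\<le>m. b (m - k) *\<^sub>R (fFi^^k) s) = 0" using rev_rec[OF lin_fFi fFi_fF recs] .
  have fd': "findep (\<lambda>k. (Gi^^k) n) {..<m}" using back_findep[OF lin_G G_Gi fd] .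
  obtain T where T: "linear T" "\<forall>k\<in>{..<m}. T ((Gi^^k) n) = (fFi^^k) s"
    using findep_extend[OF fd', of "\<lambda>k. (fFi^^k) s"] by auto
  have bm': "b (m - m) \<noteq> 0" using b0 by simp
  have Tall: "T ((Gi^^j) n) = (fFi^^j) s" for j
    using rec_ext[of Gi fFi T "\<lambda>k. b (m - k)" m n s j, OF lin_Gi lin_fFi T(1) bm' recn' recs'] T(2) by auto
  obtain BT where BT: "BT > 0" "\<And>y. norm (T y) \<le> BT * norm y" using linear_bounded_pos[OF T(1)] by blast
  have "mC^j * (na * norm s) \<le> (nb * BT * kap * norm n) * lamS^j" for j
  proof -
    have p1: "0 \<le> mC^j" "0 \<le> lamS^j" using mC_pos lamS_nonneg by auto
    have 1: "na * norm s \<le> lamS^j * (nb * norm ((fFi^^j) s))" by (rule E_S_back[OF s])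
    have 2: "norm ((fFi^^j) s) \<le> BT * norm ((Gi^^j) n)" using BT(2) Tall by metis
    have 3: "mC^j * norm ((Gi^^j) n) \<le> kap * norm n" by (rule dual_back[OF annn])
    have "mC^j * (na * norm s) \<le> mC^j * (lamS^j * (nb * norm ((fFi^^j) s)))"
      by (rule mult_left_mono[OF 1 p1(1)])
    also have "\<dots> \<le> mC^j * (lamS^j * (nb * (BT * norm ((Gi^^j) n))))"
      using 2 p1 nb(1) by (intro mult_left_mono) auto
    also have "\<dots> = (lamS^j * nb * BT) * (mC^j * norm ((Gi^^j) n))" by (simp add: algebra_simps)
    also have "\<dots> \<le> (lamS^j * nb * BT) * (kap * norm n)"
      using 3 p1 nb(1) BT(1) by (intro mult_left_mono) auto
    also have "\<dots> = (nb * BT * kap * norm n) * lamS^j" by (simp add: algebra_simps)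
    finally show ?thesis .
  qed
  then have "na * norm s \<le> 0" by (rule geom_kill[OF lamS_nonneg Am_props(2)])
  then show ?thesis using na(1) by (simp add: mult_le_0_iff)
qed

lemma U_kill:
  assumes annn: "ann n" and bm: "b m \<noteq> 0"
    and recn: "(\<Sum>k\<le>m. b k *\<^sub>R (G^^k) n) = 0" and fd: "findep (\<lambda>k. (G^^k) n) {..<m}"
    and u: "u \<in> U" and recu: "(\<Sum>k\<le>m. b k *\<^sub>R (fF^^k) u) = 0"
  shows "u = 0"
proof -
  obtain T where T: "linear T" "\<forall>k\<in>{..<m}. T ((G^^k) n) = (fF^^k) u"
    using findep_extend[OF fd, of "\<lambda>k. (fF^^k) u"] by auto
  have Tall: "T ((G^^j) n) = (fF^^j) u" for j
    using rec_ext[of G fF T b m n u j, OF lin_G lin_fF T(1) bm recn recu] T(2) by auto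
  obtain BT where BT: "BT > 0" "\<And>y. norm (T y) \<le> BT * norm y" using linear_bounded_pos[OF T(1)] by blast
  have "mU^j * (na * norm u) \<le> (nb * BT * kap * norm n) * MC^j" for j
  proof -
    have 1: "mU^j * (na * norm u) \<le> nb * norm ((fF^^j) u)" by (rule E_U_fwd[OF u])
    have 2: "norm ((fF^^j) u) \<le> BT * norm ((G^^j) n)" using BT(2) Tall by metis
    have 3: "norm ((G^^j) n) \<le> kap * MC^j * norm n" by (rule dual_fwd[OF annn])
    have "mU^j * (na * norm u) \<le> nb * (BT * norm ((G^^j) n))"
      using 1 2 nb(1) by (smt (verit) mult_left_mono)
    also have "\<dots> \<le> nb * (BT * (kap * MC^j * norm n))"
      using 3 nb(1) BT(1) by (intro mult_left_mono) auto
    also have "\<dots> = (nb * BT * kap * norm n) * MC^j" by (simp add: algebra_simps)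
    finally show ?thesis .
  qed
  then have "na * norm u \<le> 0" by (rule geom_kill[OF MC_nonneg Am_props(3)])
  then show ?thesis using na(1) by (simp add: mult_le_0_iff)
qed

lemma axis_int: "axis i 1 \<in> int_lattice"
  unfolding int_lattice_def by (simp add: axis_def)

lemma int_lattice_sum: "finite I \<Longrightarrow> (\<forall>i\<in>I. v i \<in> int_lattice) \<Longrightarrow> (\<forall>i\<in>I. c i \<in> \<int>) \<Longrightarrow>
    (\<Sum>i\<in>I. c i *\<^sub>R v i) \<in> int_lattice"
  unfolding int_lattice_def by (auto simp: sum_component intro!: Ints_sum Ints_mult)

lemma DK:
  assumes nint: "n \<in> int_lattice" and annn: "ann n"
  shows "n = 0"
proof (rule ccontr)
  assume nz: "n \<noteq> 0"
  obtain m b where mb: "0 < m" "b m \<noteq> 0" "b 0 \<noteq> 0" "\<forall>k. b k \<in> \<int>"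
      "(\<Sum>k\<le>m. b k *\<^sub>R (G^^k) n) = 0" "findep (\<lambda>k. (G^^k) n) {..<m}"
    using cyc[OF nint nz] by blast
  define muF where "muF x = (\<Sum>k\<le>m. b k *\<^sub>R (fF^^k) x)" for x
  have lk: "linear (fF^^k)" for k using linear_funpow[OF lin_fF] .
  have lin_mu: "linear muF"
  proof (rule linearI)
    fix x y show "muF (x + y) = muF x + muF y"
      unfolding muF_def using lk by (simp add: linear_add scaleR_add_right sum.distrib)
  next
    fix r x show "muF (r *\<^sub>R x) = r *\<^sub>R muF x"
      unfolding muF_def using lk by (simp add: linear_scale scaleR_sum_right mult.commute)
  qed
  have dual: "n \<bullet> muF x = 0" for x
  proof -
    have "n \<bullet> muF x = (\<Sum>k\<le>m. b k * (n \<bullet> (fF^^k) x))" unfolding muF_def by (simp add: inner_sum_right)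
    also have "\<dots> = (\<Sum>k\<le>m. b k * ((G^^k) n \<bullet> x))" by (simp add: Gpow_dot)
    also have "\<dots> = (\<Sum>k\<le>m. b k *\<^sub>R (G^^k) n) \<bullet> x" by (simp add: inner_sum_left)
    also have "\<dots> = 0" using mb(5) by simp
    finally show ?thesis .
  qed
  have ninj: "\<not> inj muF"
  proof
    assume "inj muF"
    then have "surj muF" using eucl.linear_injective_imp_surjective[OF lin_mu] by blast
    then obtain y where "muF y = n" by (metis surjD)
    then have "n \<bullet> n = 0" using dual by metis
    then show False using nz by simp
  qed
  obtain x where x: "muF x = 0" "x \<noteq> 0" using ninj linear_injective_0[OF lin_mu] by blast
  obtain i0 where i0: "x $ i0 \<noteq> 0" using x(2) by (metis vec_eq_iff zero_index)
  define v where "v i = muF (axis i 1)" for i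
  have vint: "\<forall>i\<in>UNIV. v i \<in> int_lattice"
    unfolding v_def muF_def using mb(4) axis_int int_fFpow by (intro ballI int_lattice_sum) auto
  have exp: "muF y = (\<Sum>i\<in>UNIV. y $ i *\<^sub>R v i)" for y
  proof -
    have "muF y = muF (\<Sum>i\<in>UNIV. y $ i *\<^sub>R axis i 1)"
      using basis_expansion[of y] by (simp add: scalar_mult_eq_scaleR)
    also have "\<dots> = (\<Sum>i\<in>UNIV. y $ i *\<^sub>R v i)" unfolding v_def using lin_mu
      by (simp add: linear_sum linear_scale)
    finally show ?thesis .
  qed
  obtain c' where c': "\<forall>i\<in>UNIV. c' i \<in> \<int>" "(\<Sum>i\<in>UNIV. c' i *\<^sub>R v i) = 0" "c' i0 \<noteq> 0"
    using int_dep[of UNIV v "\<lambda>i. x $ i" i0] vint exp[of x] x(1) i0 by auto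
  define z where "z = (\<chi> i. c' i)"
  have zint: "z \<in> int_lattice" unfolding z_def int_lattice_def using c'(1) by simp
  have znz: "z \<noteq> 0" using c'(3) unfolding z_def by (metis vec_lambda_beta zero_index)
  have muz: "muF z = 0" using exp[of z] c'(2) unfolding z_def by simp
  have comm: "ps (muF y) = muF (ps y)" "pu (muF y) = muF (pu y)" for y
    unfolding muF_def using lin_p(1,3) by (simp_all add: linear_sum linear_scale comm_pow)
  have "ps z = 0"
  proof (rule S_kill[OF annn mb(2,3,5,6)])
    show "ps z \<in> S" by (rule dec_props(1))
    have "muF (ps z) = 0" using comm(1)[of z] muz lin_p(1) by (simp add: linear_0)
    then show "(\<Sum>k\<le>m. b k *\<^sub>R (fF^^k) (ps z)) = 0" unfolding muF_def .
  qed
  moreover have "pu z = 0"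
  proof (rule U_kill[OF annn mb(2,5,6)])
    show "pu z \<in> U" by (rule dec_props(3))
    have "muF (pu z) = 0" using comm(2)[of z] muz lin_p(3) by (simp add: linear_0)
    then show "(\<Sum>k\<le>m. b k *\<^sub>R (fF^^k) (pu z)) = 0" unfolding muF_def .
  qed
  ultimately have "z = pc z" using dec_props(4)[of z] by simp
  then have "z \<in> C" using dec_props(2)[of z] by simp
  then have "z \<in> C \<inter> int_lattice" using zint by simp
  then show False using katz znz by simp
qed

end

context PH begin

lemma no_findepQ:
  assumes nint: "n \<in> int_lattice" and nz: "n \<noteq> 0" and bm: "b m \<noteq> 0" and b0: "b 0 \<noteq> 0"
    and recn: "(\<Sum>k\<le>m. b k *\<^sub>R (G^^k) n) = 0" and fd: "findep (\<lambda>k. (G^^k) n) {..<m}"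
  shows "\<not> findep (\<lambda>k. Q ((G^^k) n)) {..<m}"
proof
  assume fq: "findep (\<lambda>k. Q ((G^^k) n)) {..<m}"
  define h where "h = Q n"
  have annh: "ann h" unfolding h_def by (rule ann_Q)
  have fq': "findep (\<lambda>k. (G^^k) h) {..<m}" using fq unfolding h_def Q_Gpow .
  have rech: "(\<Sum>k\<le>m. b k *\<^sub>R (G^^k) h) = 0"
  proof -
    have "(\<Sum>k\<le>m. b k *\<^sub>R (G^^k) h) = Q (\<Sum>k\<le>m. b k *\<^sub>R (G^^k) n)"
      unfolding h_def using lin_Q by (simp add: linear_sum linear_scale Q_Gpow)
    then show ?thesis using recn lin_Q by (simp add: linear_0)
  qed
  have Uz: "n \<bullet> u = 0" if u: "u \<in> U" for u
  proof -
    obtain T where T: "linear T" "\<forall>k\<in>{..<m}. T ((G^^k) h) = (G^^k) n"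
      using findep_extend[OF fq', of "\<lambda>k. (G^^k) n"] by auto
    have Tall: "T ((G^^j) h) = (G^^j) n" for j
      using rec_ext[of G G T b m h n j, OF lin_G lin_G T(1) bm rech recn] T(2) by auto
    obtain BT where BT: "BT > 0" "\<And>y. norm (T y) \<le> BT * norm y" using linear_bounded_pos[OF T(1)] by blast
    have "mU^j * (na * \<bar>n \<bullet> u\<bar>) \<le> (BT * kap * norm h * nb * norm u) * MC^j" for j
    proof -
      have eq: "n \<bullet> u = (G^^j) n \<bullet> (fFi^^j) u" by (simp add: Gpow_dot pow_inv1)
      have 1: "norm ((G^^j) n) \<le> BT * (kap * MC^j * norm h)"
      proof -
        have "norm ((G^^j) n) \<le> BT * norm ((G^^j) h)" using BT(2)[of "(G^^j) h"] unfolding Tall .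
        also have "\<dots> \<le> BT * (kap * MC^j * norm h)" using dual_fwd[OF annh, of j] BT(1) by (intro mult_left_mono) auto
        finally show ?thesis .
      qed
      have 2: "mU^j * (na * norm ((fFi^^j) u)) \<le> nb * norm u" by (rule E_U_back[OF u])
      have p: "0 \<le> mU^j" using mU_pos by simp
      have "mU^j * (na * \<bar>n \<bullet> u\<bar>) \<le> mU^j * (na * (norm ((G^^j) n) * norm ((fFi^^j) u)))"
        unfolding eq using p na(1) by (intro mult_left_mono Cauchy_Schwarz_ineq2) auto
      also have "\<dots> = norm ((G^^j) n) * (mU^j * (na * norm ((fFi^^j) u)))" by (simp add: algebra_simps)
      also have "\<dots> \<le> (BT * (kap * MC^j * norm h)) * (nb * norm u)"
        using BT(1) kap_pos MC_nonneg p na(1) by (intro mult_mono[OF 1 2]) auto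
      also have "\<dots> = (BT * kap * norm h * nb * norm u) * MC^j" by (simp add: algebra_simps)
      finally show ?thesis .
    qed
    then have "na * \<bar>n \<bullet> u\<bar> \<le> 0" by (rule geom_kill[OF MC_nonneg Am_props(3)])
    then show ?thesis using na(1) by (simp add: mult_le_0_iff)
  qed
  have Sz: "n \<bullet> s = 0" if s: "s \<in> S" for s
  proof -
    have recn': "(\<Sum>k\<le>m. b (m - k) *\<^sub>R (Gi^^k) n) = 0" using rev_rec[OF lin_Gi Gi_G recn] .
    have rech': "(\<Sum>k\<le>m. b (m - k) *\<^sub>R (Gi^^k) h) = 0" using rev_rec[OF lin_Gi Gi_G rech] .
    have fh': "findep (\<lambda>k. (Gi^^k) h) {..<m}" using back_findep[OF lin_G G_Gi fq'] .
    obtain T where T: "linear T" "\<forall>k\<in>{..<m}. T ((Gi^^k) h) = (Gi^^k) n"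
      using findep_extend[OF fh', of "\<lambda>k. (Gi^^k) n"] by auto
    have bm': "b (m - m) \<noteq> 0" using b0 by simp
    have Tall: "T ((Gi^^j) h) = (Gi^^j) n" for j
      using rec_ext[of Gi Gi T "\<lambda>k. b (m - k)" m h n j, OF lin_Gi lin_Gi T(1) bm' rech' recn'] T(2) by auto
    obtain BT where BT: "BT > 0" "\<And>y. norm (T y) \<le> BT * norm y" using linear_bounded_pos[OF T(1)] by blast
    have "mC^j * (na * \<bar>n \<bullet> s\<bar>) \<le> (BT * kap * norm h * nb * norm s) * lamS^j" for j
    proof -
      have eq: "n \<bullet> s = (Gi^^j) n \<bullet> (fF^^j) s" by (simp add: Gipow_dot pow_inv2)
      have 1: "mC^j * norm ((Gi^^j) n) \<le> BT * (kap * norm h)"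
      proof -
        have "mC^j * norm ((Gi^^j) n) \<le> mC^j * (BT * norm ((Gi^^j) h))"
          using BT(2)[of "(Gi^^j) h"] mC_pos unfolding Tall by (intro mult_left_mono) auto
        also have "\<dots> = BT * (mC^j * norm ((Gi^^j) h))" by (simp add: algebra_simps)
        also have "\<dots> \<le> BT * (kap * norm h)" using dual_back[OF annh, of j] BT(1) by (intro mult_left_mono) auto
        finally show ?thesis .
      qed
      have 2: "na * norm ((fF^^j) s) \<le> lamS^j * (nb * norm s)" by (rule E_S_fwd[OF s])
      have p: "0 \<le> mC^j" using mC_pos by simp
      have "mC^j * (na * \<bar>n \<bullet> s\<bar>) \<le> mC^j * (na * (norm ((Gi^^j) n) * norm ((fF^^j) s)))"
        unfolding eq using p na(1) by (intro mult_left_mono Cauchy_Schwarz_ineq2) auto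
      also have "\<dots> = (mC^j * norm ((Gi^^j) n)) * (na * norm ((fF^^j) s))" by (simp add: algebra_simps)
      also have "\<dots> \<le> (BT * (kap * norm h)) * (lamS^j * (nb * norm s))"
        using BT(1) kap_pos p na(1) by (intro mult_mono[OF 1 2]) auto
      also have "\<dots> = (BT * kap * norm h * nb * norm s) * lamS^j" by (simp add: algebra_simps)
      finally show ?thesis .
    qed
    then have "na * \<bar>n \<bullet> s\<bar> \<le> 0" by (rule geom_kill[OF lamS_nonneg Am_props(2)])
    then show ?thesis using na(1) by (simp add: mult_le_0_iff)
  qed
  have "ann n" unfolding ann_def using Uz Sz by blast
  then have "n = 0" using DK nint by blast
  then show False using nz by simp
qed

end

lemma det_int:
  fixes A :: "real^'n^'n"
  assumes "\<forall>i j. A $ i $ j \<in> \<int>"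
  shows "det A \<in> \<int>"
  unfolding det_def using assms by (intro Ints_sum Ints_mult Ints_prod) auto

lemma det_bound:
  fixes A :: "real^'n^'n"
  shows "\<bar>det A\<bar> \<le> fact CARD('n) * (\<Prod>i\<in>UNIV. norm (A $ i))"
proof -
  have "\<bar>det A\<bar> \<le> (\<Sum>p | p permutes (UNIV::'n set). \<bar>of_int (sign p) * (\<Prod>i\<in>UNIV. A $ i $ p i)\<bar>)"
    unfolding det_def by (rule sum_abs)
  also have "\<dots> \<le> (\<Sum>p | p permutes (UNIV::'n set). (\<Prod>i\<in>UNIV. norm (A $ i)))"
  proof (rule sum_mono)
    fix p :: "'n \<Rightarrow> 'n"
    have sg: "\<bar>real_of_int (sign p)\<bar> = 1" by (metis abs_sign of_int_abs of_int_1)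
    have "\<bar>of_int (sign p) * (\<Prod>i\<in>UNIV. A $ i $ p i)\<bar> = (\<Prod>i\<in>UNIV. \<bar>A $ i $ p i\<bar>)"
      by (simp add: abs_mult abs_prod sg)
    also have "\<dots> \<le> (\<Prod>i\<in>UNIV. norm (A $ i))"
      by (intro prod_mono) (auto simp: component_le_norm_cart)
    finally show "\<bar>of_int (sign p) * (\<Prod>i\<in>UNIV. A $ i $ p i)\<bar> \<le> (\<Prod>i\<in>UNIV. norm (A $ i))" .
  qed
  also have "\<dots> = fact CARD('n) * (\<Prod>i\<in>UNIV. norm (A $ i))"
    using card_permutations[of "UNIV::'n set" "CARD('n)"] by simp
  finally show ?thesis .
qed

lemma rows_eq: "row i A = A $ i"
  unfolding row_def by simp

lemma det_nz_findep:
  fixes A :: "real^'n^'n"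
  assumes "det A \<noteq> 0"
  shows "findep (\<lambda>i. A $ i) UNIV"
proof -
  have "invertible A" using assms by (simp add: invertible_det_nz)
  then have "\<exists>B. A ** B = mat 1" by (simp add: invertible_right_inverse)
  then have "\<forall>c. (\<Sum>i\<in>UNIV. c i *s row i A) = 0 \<longrightarrow> (\<forall>i. c i = 0)"
    using matrix_right_invertible_independent_rows by blast
  then show ?thesis unfolding findep_def rows_eq scalar_mult_eq_scaleR by blast
qed

lemma findep_det_nz:
  fixes A :: "real^'n^'n"
  assumes "findep (\<lambda>i. A $ i) UNIV"
  shows "det A \<noteq> 0"
proof -
  have "\<forall>c. (\<Sum>i\<in>UNIV. c i *s row i A) = 0 \<longrightarrow> (\<forall>i. c i = 0)"
    using assms unfolding findep_def rows_eq scalar_mult_eq_scaleR by blast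
  then have "\<exists>B. A ** B = mat 1"
    using matrix_right_invertible_independent_rows by blast
  then have "invertible A" by (simp add: invertible_right_inverse)
  then show ?thesis by (simp add: invertible_det_nz)
qed

lemma findep_subset:
  assumes "findep x I" "J \<subseteq> I" "finite I"
  shows "findep x J"
  unfolding findep_def
proof (intro allI impI)
  fix c assume h: "(\<Sum>i\<in>J. c i *\<^sub>R x i) = 0"
  define c' where "c' i = (if i \<in> J then c i else 0)" for i
  have "(\<Sum>i\<in>I. c' i *\<^sub>R x i) = (\<Sum>i\<in>J. c' i *\<^sub>R x i)"
    using assms(2,3) by (intro sum.mono_neutral_right) (auto simp: c'_def)
  also have "\<dots> = 0" using h by (simp add: c'_def)
  finally have "\<forall>i\<in>I. c' i = 0" using assms(1) unfolding findep_def by blast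
  then show "\<forall>i\<in>J. c i = 0" using assms(2) by (metis c'_def subsetD)
qed

lemma findep_of_indep:
  assumes "inj_on x I" "independent (x ` I)" "finite I"
  shows "findep x I"
  unfolding findep_def
proof (intro allI impI)
  fix c assume h: "(\<Sum>i\<in>I. c i *\<^sub>R x i) = 0"
  define u where "u v = c (inv_into I x v)" for v
  have "(\<Sum>v\<in>x ` I. u v *\<^sub>R v) = (\<Sum>i\<in>I. u (x i) *\<^sub>R x i)"
    by (rule sum.reindex[OF assms(1), unfolded comp_def])
  also have "\<dots> = (\<Sum>i\<in>I. c i *\<^sub>R x i)"
    unfolding u_def using assms(1) by (intro sum.cong) auto
  finally have "(\<Sum>v\<in>x ` I. u v *\<^sub>R v) = 0" using h by simp
  then have "\<forall>v\<in>x ` I. u v = 0"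
    using assms(2,3) dependent_finite[of "x ` I"] by auto
  then show "\<forall>i\<in>I. c i = 0" unfolding u_def using assms(1) by auto
qed

lemma prod_one_small:
  fixes g :: "'i \<Rightarrow> real"
  assumes "finite A" "i0 \<in> A" "\<forall>i\<in>A. 0 \<le> g i \<and> g i \<le> 1"
  shows "(\<Prod>i\<in>A. g i) \<le> g i0"
proof -
  have "(\<Prod>i\<in>A. g i) = g i0 * (\<Prod>i\<in>A - {i0}. g i)"
    using assms(1,2) by (simp add: prod.remove)
  also have "\<dots> \<le> g i0 * 1"
    using assms by (intro mult_left_mono prod_le_1) auto
  finally show ?thesis by simp
qed

lemma Basis_int: "x \<in> (Basis :: (real^'n) set) \<Longrightarrow> x \<in> int_lattice"
  unfolding Basis_vec_def int_lattice_def by (auto simp: axis_def)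

context PH begin

definition "wq q = (\<chi> i. P (axis i 1) \<bullet> q)"

lemma w_dot: "wq q \<bullet> v = P v \<bullet> q"
proof -
  have "P v = P (\<Sum>i\<in>UNIV. v $ i *\<^sub>R axis i 1)"
    using basis_expansion[of v] by (simp add: scalar_mult_eq_scaleR)
  also have "\<dots> = (\<Sum>i\<in>UNIV. v $ i *\<^sub>R P (axis i 1))"
    using linP by (simp add: linear_sum linear_scale)
  finally have "P v \<bullet> q = (\<Sum>i\<in>UNIV. v $ i * (P (axis i 1) \<bullet> q))"
    by (simp add: inner_sum_left)
  moreover have "wq q \<bullet> v = (\<Sum>i\<in>UNIV. (P (axis i 1) \<bullet> q) * v $ i)"
    unfolding wq_def inner_vec_def by simp
  ultimately show ?thesis by (simp add: mult.commute)
qed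

lemma P_S: "s \<in> S \<Longrightarrow> P s = 0"
  using Pc[of s] pS[of s] linP unfolding cproj_pc by (simp add: linear_0)
lemma P_U: "u \<in> U \<Longrightarrow> P u = 0"
  using Pc[of u] pU[of u] linP unfolding cproj_pc by (simp add: linear_0)

lemma ann_w: "ann (wq q)"
  unfolding ann_def w_dot using P_S P_U by simp

lemma w_iota: "wq q $ (\<iota> j) = q $ j"
proof -
  have "wq q $ (\<iota> j) = P (axis (\<iota> j) 1) \<bullet> q" unfolding wq_def by simp
  also have "\<dots> = axis j 1 \<bullet> q" using Pc[of "axis (\<iota> j) 1"] Pb[of j] by simp
  also have "\<dots> = q $ j" by (simp add: cart_eq_inner_axis inner_commute)
  finally show ?thesis .
qed

definition "bC j = pc (axis (\<iota> j) 1)"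

lemma annL_inj: "ann h \<Longrightarrow> (\<forall>j. h \<bullet> bC j = 0) \<Longrightarrow> h = 0"
proof -
  assume h: "ann h" "\<forall>j. h \<bullet> bC j = 0"
  have sub: "subspace {x. h \<bullet> x = 0}"
    unfolding subspace_def by (simp add: inner_add_right)
  have "range bC \<subseteq> {x. h \<bullet> x = 0}" using h(2) by auto
  then have "span (range bC) \<subseteq> {x. h \<bullet> x = 0}" using span_minimal sub by blast
  moreover have "span (range bC) = C" using spanb unfolding bC_def cproj_pc .
  ultimately have "h \<bullet> pc v = 0" for v using dec_props(2)[of v] by blast
  then have "h \<bullet> h = 0" using ann_pc[OF h(1)] by simp
  then show "h = 0" by simp
qed

lemma card_ann:
  assumes fd: "findep x J" and fin: "finite J" and an: "\<forall>i\<in>J. ann (x i)"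
  shows "card J \<le> CARD('c)"
proof -
  define L where "L h = (\<chi> j. h \<bullet> bC j)" for h :: "real^'d"
  have linL: "linear L"
    by (rule linearI) (simp_all add: L_def vec_eq_iff inner_add_left)
  have subW: "subspace {h. ann h}"
    unfolding subspace_def ann_def by (simp add: inner_add_left)
  have "findep (\<lambda>i. L (x i)) J"
  proof (rule findep_linear_image[OF fd linL subW])
    show "\<forall>i\<in>J. x i \<in> {h. ann h}" using an by simp
    show "\<forall>w\<in>{h. ann h}. L w = 0 \<longrightarrow> w = 0"
      using annL_inj unfolding L_def by (auto simp: vec_eq_iff)
  qed
  then have "card J \<le> DIM(real^'c)" using findep_card fin by blast
  then show ?thesis by simp
qed

end

context PH begin

lemma two_idx: "\<exists>i1 i2::'d. i1 \<noteq> i2"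
proof -
  have "S \<noteq> {0}" "C \<noteq> {0}" using ph unfolding partially_hyperbolic_def by blast+
  then obtain s c where s: "s \<in> S" "s \<noteq> 0" and c: "c \<in> C" "c \<noteq> 0"
    using nonzero_in[OF _ subS] nonzero_in[OF _ subC] by meson
  define x where "x t = (if t then s else c)" for t
  have SC0: "y = 0" if "y \<in> S" "y \<in> C" for y using pS[OF that(1)] pC[OF that(2)] by simp
  have "findep x (UNIV::bool set)"
    unfolding findep_def
  proof (intro allI impI)
    fix u assume h: "(\<Sum>t\<in>UNIV. u t *\<^sub>R x t) = 0"
    have "(\<Sum>t\<in>UNIV. u t *\<^sub>R x t) = u False *\<^sub>R c + u True *\<^sub>R s"
      unfolding UNIV_bool x_def by simp
    then have "u True *\<^sub>R s + u False *\<^sub>R c = 0" using h by (simp add: add.commute)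
    then have e: "u True *\<^sub>R s = - (u False *\<^sub>R c)" by (simp add: eq_neg_iff_add_eq_0)
    have "u True *\<^sub>R s \<in> S" using s subS by (simp add: subspace_scale)
    moreover have "u True *\<^sub>R s \<in> C" unfolding e using c subC by (simp add: subspace_scale subspace_neg)
    ultimately have "u True *\<^sub>R s = 0" using SC0 by blast
    then have "u True = 0" "u False *\<^sub>R c = 0" using s(2) e by auto
    then show "\<forall>t\<in>UNIV. u t = 0" using c(2) by (auto simp: UNIV_bool)
  qed
  moreover have "finite (UNIV::bool set)" by simp
  ultimately have "card (UNIV::bool set) \<le> DIM(real^'d)" by (rule findep_card)
  then have "2 \<le> CARD('d)" by simp
  then obtain i1 where "i1 \<in> (UNIV::'d set)" by blast
  have "card (UNIV - {i1} :: 'd set) \<ge> 1" using \<open>2 \<le> CARD('d)\<close> by (simp add: card_Diff_singleton)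
  then obtain i2 where "i2 \<in> UNIV - {i1}" by (metis card.empty ex_in_conv not_one_le_zero)
  then show ?thesis by blast
qed

lemma main:
  "\<exists>K>0. \<forall>q::real^'c. q \<in> int_lattice \<and> q \<noteq> 0 \<longrightarrow>
           (\<exists>i::'d. \<forall>p\<in>\<int>. \<bar>P (axis i 1) \<bullet> q - p\<bar> > K / norm q ^ CARD('c))"
proof -
  obtain BG where BG: "BG > 0" "\<And>x. norm (G x) \<le> BG * norm x"
    using linear_bounded_pos[OF lin_G] by blast
  define BG1 where "BG1 = max 1 BG"
  have BG1: "BG1 \<ge> 1" "\<And>x. norm (G x) \<le> BG1 * norm x"
  proof -
    show "BG1 \<ge> 1" unfolding BG1_def by simp
    fix x :: "real^'d" have "BG * norm x \<le> BG1 * norm x" unfolding BG1_def by (intro mult_right_mono) auto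
    then show "norm (G x) \<le> BG1 * norm x" using BG(2)[of x] by simp
  qed
  have BGpow: "norm ((G^^k) x) \<le> BG1^k * norm x" for k x
  proof (induction k)
    case 0 then show ?case by simp
  next
    case (Suc k)
    have "norm ((G^^Suc k) x) \<le> BG1 * norm ((G^^k) x)" using BG1(2) by simp
    also have "\<dots> \<le> BG1 * (BG1^k * norm x)" using Suc BG1(1) by (intro mult_left_mono) auto
    finally show ?case by simp
  qed
  have BGd: "norm ((G^^k) x) \<le> BG1^CARD('d) * norm x" if "k \<le> CARD('d)" for k x
  proof -
    have "BG1^k \<le> BG1^CARD('d)" using power_increasing[OF that BG1(1)] .
    then have "BG1^k * norm x \<le> BG1^CARD('d) * norm x" by (intro mult_right_mono) auto
    then show ?thesis using BGpow[of k x] by simp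
  qed
  obtain BQ where BQ: "BQ > 0" "\<And>x. norm (Q x) \<le> BQ * norm x"
    using linear_bounded_pos[OF lin_Q] by blast
  define PS where "PS = (\<Sum>i\<in>UNIV. norm (P (axis i 1 :: real^'d)))"
  have PS0: "PS \<ge> 0" unfolding PS_def by (simp add: sum_nonneg)
  define dd where "dd = real CARD('d)"
  have dd0: "dd \<ge> 0" unfolding dd_def by simp
  define C1 where "C1 = max 1 (BG1^CARD('d) * (PS + BQ * dd))"
  define C2 where "C2 = max 1 (BG1^CARD('d) * ((1 + BQ) * dd))"
  have C1: "C1 \<ge> 1" and C2: "C2 \<ge> 1" unfolding C1_def C2_def by auto
  obtain i1 i2 :: 'd where i12: "i1 \<noteq> i2" using two_idx by blast
  define F2 where "F2 = {f::'d \<Rightarrow> 'd. \<forall>i. f i \<in> {i1, i2}}"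
  define NF where "NF = real (card F2)"
  have NF: "NF \<ge> 1"
  proof -
    have "(\<lambda>_. i1) \<in> F2" unfolding F2_def by simp
    then have "card F2 > 0" by (simp add: card_gt_0_iff) blast
    then show ?thesis unfolding NF_def by linarith
  qed
  define D where "D = 2 * NF * fact CARD('d) * C2 * C1^CARD('c)"
  have fact1: "(fact CARD('d) :: real) \<ge> 1" by simp
  have C1c: "C1^CARD('c) \<ge> 1" using C1 by simp
  have D2C2: "D \<ge> 2 * C2"
  proof -
    have "NF * fact CARD('d) * C1^CARD('c) \<ge> 1 * 1 * 1"
      using NF fact1 C1c by (intro mult_mono) auto
    then have "2 * C2 * (NF * fact CARD('d) * C1^CARD('c)) \<ge> 2 * C2 * 1"
      using C2 by (intro mult_left_mono) auto
    then show ?thesis unfolding D_def by (simp add: algebra_simps)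
  qed
  have Dpos: "D > 0" using D2C2 C2 by simp
  define K where "K = 1 / D"
  have Kpos: "K > 0" unfolding K_def using Dpos by simp
  have C2K: "C2 * K \<le> 1 / 2" unfolding K_def using D2C2 Dpos C2 by (simp add: field_simps)
  have K1: "K \<le> 1 / 2" using C2K C2 Kpos by (smt (verit) mult_le_cancel_right1)
  have KD: "NF * fact CARD('d) * C2 * C1^CARD('c) * K = 1 / 2"
    unfolding K_def D_def using Dpos[unfolded D_def] C1 C2 NF by (simp add: field_simps)
  show ?thesis
  proof (intro exI[of _ K] conjI allI impI)
    show "K > 0" by (rule Kpos)
    fix q :: "real^'c"
    assume qa: "q \<in> int_lattice \<and> q \<noteq> 0"
    define eps where "eps = K / norm q ^ CARD('c)"
    show "\<exists>i::'d. \<forall>p\<in>\<int>. \<bar>P (axis i 1) \<bullet> q - p\<bar> > eps"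
    proof (rule ccontr)
      assume "\<not> (\<exists>i::'d. \<forall>p\<in>\<int>. \<bar>P (axis i 1) \<bullet> q - p\<bar> > eps)"
      then have "\<forall>i::'d. \<exists>p\<in>\<int>. \<bar>P (axis i 1) \<bullet> q - p\<bar> \<le> eps" by (auto simp: not_less)
      then obtain p where p: "\<And>i. p i \<in> \<int>" "\<And>i. \<bar>P (axis i 1) \<bullet> q - p i\<bar> \<le> eps" by metis
      obtain j0 where j0: "q $ j0 \<noteq> 0" using qa by (metis vec_eq_iff zero_index)
      have "q $ j0 \<in> \<int>" using qa unfolding int_lattice_def by blast
      then have "1 \<le> \<bar>q $ j0\<bar>" using j0 by (rule Ints_nonzero_abs_ge1)
      then have nq: "norm q \<ge> 1" using component_le_norm_cart[of q j0] by linarith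
      have nqc: "norm q ^ CARD('c) \<ge> 1" using nq by simp
      have eps_pos: "eps > 0" unfolding eps_def using Kpos nqc by (intro divide_pos_pos) auto
      have eps_K: "eps \<le> K"
      proof -
        have "K / norm q ^ CARD('c) \<le> K / 1"
          using Kpos nqc by (intro divide_left_mono) auto
        then show ?thesis unfolding eps_def by simp
      qed
      have eps_eq: "eps * norm q ^ CARD('c) = K" unfolding eps_def using nqc qa by simp
      have eps1: "eps \<le> 1" using eps_K K1 by simp
      have "C2 * eps \<le> C2 * K" using eps_K C2 by (intro mult_left_mono) auto
      then have C2eps: "C2 * eps \<le> 1" using C2K by linarith
      define w where "w = wq q"
      have annw: "ann w" unfolding w_def by (rule ann_w)
      define n where "n = (\<chi> i. p i)"
      have nint: "n \<in> int_lattice" unfolding n_def int_lattice_def using p(1) by simp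
      define r where "r = n - w"
      have nwr: "n = w + r" unfolding r_def by simp
      have rcomp: "\<bar>r $ i\<bar> \<le> eps" for i
        using p(2)[of i] unfolding r_def n_def w_def wq_def by (simp add: abs_minus_commute)
      have nr: "norm r \<le> dd * eps"
      proof -
        have "norm r \<le> (\<Sum>i\<in>UNIV. \<bar>r $ i\<bar>)" by (rule norm_le_l1_cart)
        also have "\<dots> \<le> (\<Sum>i\<in>(UNIV::'d set). eps)" using rcomp by (intro sum_mono) auto
        finally show ?thesis unfolding dd_def by simp
      qed
      have nw: "norm w \<le> PS * norm q"
      proof -
        have "norm w \<le> (\<Sum>i\<in>UNIV. \<bar>w $ i\<bar>)" by (rule norm_le_l1_cart)
        also have "\<dots> \<le> (\<Sum>i\<in>UNIV. norm (P (axis i 1 :: real^'d)) * norm q)"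
          unfolding w_def wq_def by (intro sum_mono) (simp add: Cauchy_Schwarz_ineq2)
        finally show ?thesis unfolding PS_def by (simp add: sum_distrib_right)
      qed
      have nz: "n \<noteq> 0"
      proof
        assume n0: "n = 0"
        have "q $ j = 0" for j
        proof -
          have "\<bar>w $ (\<iota> j) - n $ (\<iota> j)\<bar> \<le> eps"
            using p(2)[of "\<iota> j"] unfolding w_def wq_def n_def by simp
          then have "\<bar>q $ j\<bar> \<le> eps" using n0 w_iota[of q j] unfolding w_def by simp
          then have "\<bar>q $ j\<bar> < 1" using eps_K K1 by simp
          moreover have "q $ j \<in> \<int>" using qa unfolding int_lattice_def by blast
          ultimately show ?thesis using Ints_nonzero_abs_ge1[of "q $ j"] by linarith
        qed
        then have "q = 0" by (simp add: vec_eq_iff)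
        then show False using qa by simp
      qed
      obtain m b where mb: "0 < m" "m \<le> CARD('d)" "b m \<noteq> 0" "b 0 \<noteq> 0" "\<forall>k. b k \<in> \<int>"
          "(\<Sum>k\<le>m. b k *\<^sub>R (G^^k) n) = 0" "findep (\<lambda>k. (G^^k) n) {..<m}"
        using cyc[OF nint nz] by blast
      define X where "X k = (G^^k) n" for k
      have fdX: "findep X {..<m}" using mb(7) unfolding X_def .
      have noQ: "\<not> findep (\<lambda>k. Q (X k)) {..<m}"
        using no_findepQ[OF nint nz mb(3,4,6,7)] unfolding X_def .
      have Qn: "Q n = w + Q r" unfolding nwr using lin_Q Q_ann[OF annw] by (simp add: linear_add)
      have bound1: "norm (Q (X k)) \<le> C1 * norm q" if "k < m" for k
      proof -
        have "norm (Q (X k)) = norm ((G^^k) (Q n))" unfolding X_def Q_Gpow ..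
        also have "\<dots> \<le> BG1^CARD('d) * norm (Q n)" using BGd that mb(2) by simp
        also have "\<dots> \<le> BG1^CARD('d) * ((PS + BQ * dd) * norm q)"
        proof -
          have "norm (Q n) \<le> norm w + norm (Q r)" unfolding Qn by (rule norm_triangle_ineq)
          also have "\<dots> \<le> PS * norm q + BQ * (dd * eps)"
          proof -
            have "norm (Q r) \<le> BQ * (dd * eps)"
              using BQ(2)[of r] mult_left_mono[OF nr, of BQ] BQ(1) by linarith
            then show ?thesis using nw by linarith
          qed
          also have "\<dots> \<le> PS * norm q + BQ * (dd * norm q)"
            using eps1 nq BQ(1) dd0 by (intro add_left_mono mult_left_mono) auto
          finally have "norm (Q n) \<le> (PS + BQ * dd) * norm q" by (simp add: algebra_simps)
          then show ?thesis using BG1(1) by (intro mult_left_mono) auto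
        qed
        also have "\<dots> \<le> C1 * norm q" unfolding C1_def by (simp add: mult.assoc[symmetric] mult_right_mono)
        finally show ?thesis .
      qed
      have bound2: "norm (X k - Q (X k)) \<le> C2 * eps" if "k < m" for k
      proof -
        have lk: "linear (G^^k)" using linear_funpow[OF lin_G] .
        have "X k - Q (X k) = (G^^k) (n - Q n)" unfolding X_def Q_Gpow using lk by (simp add: linear_diff)
        also have "n - Q n = r - Q r" by (simp only: Qn) (simp add: nwr)
        finally have e: "X k - Q (X k) = (G^^k) (r - Q r)" .
        have "norm (r - Q r) \<le> norm r + norm (Q r)" by (rule norm_triangle_ineq4)
        also have "\<dots> \<le> (1 + BQ) * norm r" using BQ(2)[of r] by (simp add: algebra_simps)
        also have "\<dots> \<le> (1 + BQ) * (dd * eps)" using nr BQ(1) by (intro mult_left_mono) auto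
        finally have "norm (r - Q r) \<le> (1 + BQ) * dd * eps" by simp
        then have "BG1^CARD('d) * norm (r - Q r) \<le> BG1^CARD('d) * ((1 + BQ) * dd * eps)"
          using BG1(1) by (intro mult_left_mono) auto
        then have "norm (X k - Q (X k)) \<le> BG1^CARD('d) * ((1 + BQ) * dd * eps)"
          unfolding e using BGd[of k "r - Q r"] that mb(2) by linarith
        also have "\<dots> \<le> C2 * eps" unfolding C2_def using eps_pos
          by (simp add: mult.assoc[symmetric] mult_right_mono)
        finally show ?thesis .
      qed
      define S0 where "S0 = X ` {..<m}"
      have indS0: "independent S0" unfolding S0_def using findep_independent[OF fdX] by simp
      have S0int: "\<forall>x\<in>S0. x \<in> int_lattice" unfolding S0_def X_def using int_Gpow[OF nint] by blast
      obtain B where B: "S0 \<subseteq> B" "B \<subseteq> S0 \<union> Basis" "independent B" "S0 \<union> Basis \<subseteq> span B"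
        using maximal_independent_subset_extend[of S0 "S0 \<union> Basis"] indS0 by blast
      have spanB: "span B = UNIV"
      proof -
        have "span Basis \<subseteq> span B" using B(4) span_minimal[of Basis "span B"] subspace_span by blast
        then show ?thesis using span_Basis by auto
      qed
      have finB: "finite B" using independent_bound[OF B(3)] by blast
      have cardB: "card B = CARD('d)"
      proof -
        have "card B = dim (span B)" using dim_span_eq_card_independent[OF B(3)] by simp
        also have "\<dots> = CARD('d)" unfolding spanB by simp
        finally show ?thesis .
      qed
      obtain \<beta> where \<beta>: "bij_betw \<beta> (UNIV::'d set) B"
        using finite_same_card_bij[of "UNIV::'d set" B] finB cardB by auto
      have \<beta>inj: "inj \<beta>" and \<beta>img: "\<beta> ` UNIV = B"
        using \<beta> unfolding bij_betw_def by auto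
      have \<beta>in: "\<beta> i \<in> S0 \<union> Basis" for i using B(2) \<beta>img by blast
      define M where "M = (\<chi> i. \<beta> i)"
      have Mrow: "M $ i = \<beta> i" for i unfolding M_def by simp
      have detM_nz: "det M \<noteq> 0"
      proof (rule findep_det_nz)
        show "findep (\<lambda>i. M $ i) UNIV" unfolding Mrow
          using findep_of_indep[of \<beta> UNIV] \<beta>inj \<beta>img B(3) by simp
      qed
      have detM_int: "det M \<in> \<int>"
      proof (rule det_int, intro allI)
        fix i j
        have "\<beta> i \<in> int_lattice" using \<beta>in[of i] S0int Basis_int by blast
        then show "M $ i $ j \<in> \<int>" unfolding Mrow int_lattice_def by blast
      qed
      have detM1: "1 \<le> \<bar>det M\<bar>" using Ints_nonzero_abs_ge1[OF detM_int detM_nz] .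
      define b1 where "b1 i = (if \<beta> i \<in> S0 then Q (\<beta> i) else \<beta> i)" for i
      define b2 where "b2 i = (if \<beta> i \<in> S0 then \<beta> i - Q (\<beta> i) else 0)" for i
      define a where "a i t = (if t = i1 then b1 i else if t = i2 then b2 i else 0)" for i t
      have rs: "(\<Sum>t\<in>{i1, i2}. a i t) = \<beta> i" for i
      proof -
        have "(\<Sum>t\<in>{i1, i2}. a i t) = a i i1 + a i i2" using i12 by simp
        also have "\<dots> = b1 i + b2 i" using i12 unfolding a_def by simp
        also have "\<dots> = \<beta> i" unfolding b1_def b2_def by simp
        finally show ?thesis .
      qed
      have Msum: "M = (\<chi> i. \<Sum>t\<in>{i1, i2}. a i t)" unfolding M_def rs ..
      have detexp: "det M = (\<Sum>f\<in>F2. det (\<chi> i. a i (f i)))"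
        unfolding Msum F2_def using det_linear_rows_sum[of "{i1, i2}" a] by simp
      have term_bound: "\<bar>det (\<chi> i. a i (f i))\<bar> \<le> fact CARD('d) * (C2 * eps * (C1 * norm q)^CARD('c))"
        if fF2: "f \<in> F2" for f
      proof (cases "det (\<chi> i. a i (f i)) = 0")
        case True
        then show ?thesis using C1 C2 eps_pos nq by simp
      next
        case False
        define R where "R = (\<chi> i. a i (f i))"
        have Rrow: "R $ i = (if f i = i1 then b1 i else b2 i)" for i
          using fF2 unfolding R_def F2_def a_def by auto
        have fdR: "findep (\<lambda>i. R $ i) UNIV" using det_nz_findep False unfolding R_def by blast
        define J where "J = {i. \<beta> i \<in> S0 \<and> f i = i1}"
        define Z where "Z = {i. \<beta> i \<in> S0 \<and> f i \<noteq> i1}"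
        have RJ: "R $ i = Q (\<beta> i)" if "i \<in> J" for i using that unfolding Rrow b1_def J_def by simp
        have cardJ: "card J \<le> CARD('c)"
        proof (rule card_ann)
          show "findep (\<lambda>i. R $ i) J" using findep_subset[OF fdR] by simp
          show "finite J" by simp
          show "\<forall>i\<in>J. ann (R $ i)" using RJ ann_Q by simp
        qed
        have "Z \<noteq> {}"
        proof
          assume Z0: "Z = {}"
          then have Jeq: "J = {i. \<beta> i \<in> S0}" unfolding J_def Z_def by auto
          have fdJ: "findep (\<lambda>i. R $ i) J" using findep_subset[OF fdR] by simp
          have e1: "(\<lambda>i. R $ i) ` J = (Q \<circ> \<beta>) ` J" using RJ by (auto simp: image_iff)
          have injJ: "inj_on (Q \<circ> \<beta>) J"
            using findep_inj[OF fdJ] RJ by (simp add: inj_on_def)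
          have indJ: "independent ((Q \<circ> \<beta>) ` J)" using findep_independent[OF fdJ] e1 by simp
          have bJ: "\<beta> ` J = S0"
          proof
            show "\<beta> ` J \<subseteq> S0" unfolding Jeq by auto
            show "S0 \<subseteq> \<beta> ` J"
            proof
              fix x assume x: "x \<in> S0"
              then have "x \<in> B" using B(1) by blast
              then obtain i where "x = \<beta> i" using \<beta>img by blast
              then show "x \<in> \<beta> ` J" using x unfolding Jeq by blast
            qed
          qed
          have injQ: "inj_on Q S0" using inj_on_imageI[OF injJ] bJ by simp
          have injX: "inj_on X {..<m}" using findep_inj[OF fdX] by simp
          have injQX: "inj_on (\<lambda>k. Q (X k)) {..<m}"
            using comp_inj_on[OF injX] injQ unfolding S0_def by (simp add: comp_def)
          have imgQX: "(\<lambda>k. Q (X k)) ` {..<m} = (Q \<circ> \<beta>) ` J"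
          proof -
            have "(\<lambda>k. Q (X k)) ` {..<m} = Q ` (X ` {..<m})" by (simp add: image_image)
            also have "\<dots> = Q ` (\<beta> ` J)" using bJ unfolding S0_def by simp
            also have "\<dots> = (Q \<circ> \<beta>) ` J" by (simp add: image_comp)
            finally show ?thesis .
          qed
          have "findep (\<lambda>k. Q (X k)) {..<m}"
            using findep_of_indep[OF injQX] indJ imgQX by simp
          then show False using noQ by simp
        qed
        then obtain i0 where i0: "i0 \<in> Z" by blast
        define g where "g i = (if i \<in> J then C1 * norm q else if i \<in> Z then C2 * eps else 1)" for i
        have rowb: "norm (R $ i) \<le> g i" for i
        proof (cases "i \<in> J")
          case True
          then obtain k where k: "k < m" "\<beta> i = X k" unfolding J_def S0_def by auto
          show ?thesis using True RJ[OF True] bound1[OF k(1)] k(2) unfolding g_def by simp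
        next
          case notJ: False
          show ?thesis
          proof (cases "i \<in> Z")
            case True
            then obtain k where k: "k < m" "\<beta> i = X k" unfolding Z_def S0_def by auto
            have "R $ i = \<beta> i - Q (\<beta> i)" using True unfolding Rrow b2_def Z_def by simp
            then show ?thesis using notJ True bound2[OF k(1)] k(2) unfolding g_def by simp
          next
            case notZ: False
            then have nS0: "\<beta> i \<notin> S0" using notJ unfolding J_def Z_def by auto
            then have bB: "\<beta> i \<in> Basis" using \<beta>in[of i] by blast
            show ?thesis
            proof (cases "f i = i1")
              case True
              then have "R $ i = \<beta> i" using nS0 unfolding Rrow b1_def by simp
              then show ?thesis using notJ notZ norm_Basis[OF bB] unfolding g_def by simp
            next
              case False
              then have "R $ i = 0" using nS0 unfolding Rrow b2_def by simp
              then show ?thesis using notJ notZ unfolding g_def by simp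
            qed
          qed
        qed
        have g0: "g i \<ge> 0" for i unfolding g_def using C1 C2 eps_pos nq by simp
        have "(\<Prod>i\<in>UNIV. norm (R $ i)) \<le> (\<Prod>i\<in>UNIV. g i)"
          using rowb by (intro prod_mono) auto
        also have "\<dots> = (\<Prod>i\<in>UNIV - J. g i) * (\<Prod>i\<in>J. g i)"
          by (rule prod.subset_diff) auto
        also have "\<dots> \<le> (C2 * eps) * (C1 * norm q)^CARD('c)"
        proof (rule mult_mono)
          have "i0 \<notin> J" using i0 unfolding J_def Z_def by auto
          have "(\<Prod>i\<in>UNIV - J. g i) \<le> g i0"
            using \<open>i0 \<notin> J\<close> g0 C2eps C2 eps_pos by (intro prod_one_small) (auto simp: g_def)
          then show "(\<Prod>i\<in>UNIV - J. g i) \<le> C2 * eps" using i0 \<open>i0 \<notin> J\<close> unfolding g_def by simp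
          have "(\<Prod>i\<in>J. g i) = (C1 * norm q)^card J" unfolding g_def by simp
          also have "\<dots> \<le> (C1 * norm q)^CARD('c)"
          proof (rule power_increasing[OF cardJ])
            show "1 \<le> C1 * norm q" using C1 nq by (metis mult_mono' mult_1 zero_le_one)
          qed
          finally show "(\<Prod>i\<in>J. g i) \<le> (C1 * norm q)^CARD('c)" .
          show "0 \<le> C2 * eps" using C2 eps_pos by simp
          show "0 \<le> (\<Prod>i\<in>J. g i)" using g0 by (simp add: prod_nonneg)
        qed
        finally have pb: "(\<Prod>i\<in>UNIV. norm (R $ i)) \<le> C2 * eps * (C1 * norm q)^CARD('c)" .
        have "\<bar>det R\<bar> \<le> fact CARD('d) * (\<Prod>i\<in>UNIV. norm (R $ i))" by (rule det_bound)
        also have "\<dots> \<le> fact CARD('d) * (C2 * eps * (C1 * norm q)^CARD('c))"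
          using pb by (intro mult_left_mono) auto
        finally show ?thesis unfolding R_def .
      qed
      have "\<bar>det M\<bar> \<le> (\<Sum>f\<in>F2. \<bar>det (\<chi> i. a i (f i))\<bar>)" unfolding detexp by (rule sum_abs)
      also have "\<dots> \<le> (\<Sum>f\<in>F2. fact CARD('d) * (C2 * eps * (C1 * norm q)^CARD('c)))"
        using term_bound by (intro sum_mono) auto
      also have "\<dots> = NF * fact CARD('d) * (C2 * eps * (C1 * norm q)^CARD('c))"
        unfolding NF_def by simp
      also have "\<dots> = NF * fact CARD('d) * C2 * C1^CARD('c) * (eps * norm q ^ CARD('c))"
        by (simp add: power_mult_distrib algebra_simps)
      also have "\<dots> = 1 / 2" unfolding eps_eq using KD .
      finally show False using detM1 by simp
    qed
  qed
qed

end

theorem theorem3p3: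
  fixes F :: "real^'d^'d"
    and S C U :: "(real^'d) set"
    and \<iota> :: "'c::finite \<Rightarrow> 'd"
    and P :: "real^'d \<Rightarrow> real^'c"
  assumes "SL_int F"
    and "partially_hyperbolic F S C U"
    and "C \<inter> int_lattice = {0}"
    and "inj (\<lambda>j. cproj S C U (axis (\<iota> j) 1))"
    and "independent (range (\<lambda>j. cproj S C U (axis (\<iota> j) 1)))"
    and "span (range (\<lambda>j. cproj S C U (axis (\<iota> j) 1))) = C"
    and "linear P"
    and "\<And>v. P v = P (cproj S C U v)"
    and "\<And>j. P (cproj S C U (axis (\<iota> j) 1)) = axis j 1"
  shows "\<exists>K>0. \<forall>q::real^'c. q \<in> int_lattice \<and> q \<noteq> 0 \<longrightarrow>
           (\<exists>i::'d. \<forall>p\<in>\<int>. \<bar>P (axis i 1) \<bullet> q - p\<bar> > K / norm q ^ CARD('c))"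
proof -
  interpret PH F S C U \<iota> P
    by (rule PH.intro[OF assms(1,2,3,6,7,8,9)])
  show ?thesis by (rule main)
qed

end
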